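(* Let $s(n)$ be defined by $\sum_{n\ge0}s(n)q^n=\frac{(q^2;q^2)_\infty}{(q;q)_\infty^2(q^4;q^4)_\infty^2}$. Let $U:=\{j(3j+2): j\in\mathbb Z\setminus\{0\}\}$. Then for every $n\ge0$, $$s(n)=\sum_{\substack{c\in\mathcal C_U\\ |c|=n}}\ \prod_{j\in\mathbb Z\setminus\{0\}}(-1-3j)^{m_{j(3j+2)}(c)}.$$
   Context: $(a;q)_\infty:=\prod_{i\ge0}(1-aq^i)$. A composition is an ordered finite sequence of positive integers (including the empty one); $|c|$ is the sum of parts; $m_i(c)$ is the number of parts equal to $i$; $\mathcal C_T$ is the set of compositions with all parts in $T$. *)

theory Defs
  imports "HOL-Analysis.Analysis"
begin

definition qpoch_inf :: "real \<Rightarrow> real \<Rightarrow> real" where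
  "qpoch_inf a q = prodinf (\<lambda>i. 1 - a * q ^ i)"

definition compositions :: "nat set \<Rightarrow> nat list set" where
  "compositions T = {c. \<forall>x \<in> set c. 0 < x \<and> x \<in> T}"

definition mult :: "nat \<Rightarrow> nat list \<Rightarrow> nat" where
  "mult i c = count_list c i"

text \<open>U = { j(3j+2) : j in Z, j /= 0 }  (all such values are positive).\<close>
definition U15 :: "nat set" where
  "U15 = {nat (j * (3 * j + 2)) | j :: int. j \<noteq> 0}"

end

theory Submission
  imports Defs
begin


fun gb :: "real \<Rightarrow> nat \<Rightarrow> nat \<Rightarrow> real" where
  "gb p 0 0 = 1"
| "gb p 0 (Suc k) = 0"
| "gb p (Suc M) 0 = 1"
| "gb p (Suc M) (Suc k) = gb p M k + p ^ Suc k * gb p M (Suc k)"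

definition pn :: "real \<Rightarrow> nat \<Rightarrow> real" where
  "pn p n = (\<Prod>i<n. 1 - p ^ Suc i)"

lemma pn_Suc: "pn p (Suc n) = pn p n * (1 - p ^ Suc n)"
  by (simp add: pn_def)

lemma pn_0[simp]: "pn p 0 = 1" by (simp add: pn_def)

lemma gb_gt: "k > M \<Longrightarrow> gb p M k = 0"
proof (induction M arbitrary: k)
  case 0 then show ?case by (cases k) auto
next
  case (Suc M) then show ?case by (cases k) auto
qed

lemma gb_M0[simp]: "gb p M 0 = 1" by (cases M) auto

lemma gb_MM[simp]: "gb p M M = 1"
  by (induction M) (auto simp: gb_gt)

lemma T_Suc: "Suc k * (Suc k - 1) div 2 = k * (k - 1) div 2 + k"
proof -
  have "Suc k * (Suc k - 1) = k * (k - 1) + 2 * k" by (cases k) (auto simp: algebra_simps)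
  then show ?thesis by simp
qed

lemma gb_closed: "k \<le> M \<Longrightarrow> pn p k * pn p (M - k) * gb p M k = pn p M"
proof (induction M arbitrary: k)
  case 0 then show ?case by simp
next
  case (Suc M)
  show ?case
  proof (cases k)
    case 0 then show ?thesis by simp
  next
    case (Suc j)
    show ?thesis
    proof (cases "j = M")
      case True
      have "gb p M (Suc M) = 0" by (simp add: gb_gt)
      with True Suc show ?thesis by (simp add: pn_Suc)
    next
      case False
      with Suc Suc.prems have jM: "j < M" by simp
      have IH1: "pn p j * pn p (M - j) * gb p M j = pn p M" using Suc.IH[of j] jM by simp
      have IH2: "pn p (Suc j) * pn p (M - Suc j) * gb p M (Suc j) = pn p M" using Suc.IH[of "Suc j"] jM by simp
      have e1: "pn p (Suc M - Suc j) = pn p (M - j)" by simp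
      have e2: "pn p (M - j) = pn p (M - Suc j) * (1 - p ^ (M - j))"
        using jM by (metis Suc_diff_Suc pn_Suc)
      have "pn p (Suc j) * pn p (Suc M - Suc j) * gb p (Suc M) (Suc j)
          = pn p (Suc j) * pn p (M - j) * gb p M j + p ^ Suc j * (pn p (Suc j) * pn p (M - j) * gb p M (Suc j))"
        by (simp add: algebra_simps)
      also have "pn p (Suc j) * pn p (M - j) * gb p M j = (1 - p ^ Suc j) * pn p M"
        using IH1 by (simp add: pn_Suc algebra_simps)
      also have "pn p (Suc j) * pn p (M - j) * gb p M (Suc j) = (1 - p ^ (M - j)) * pn p M"
      proof -
        have "pn p (Suc j) * pn p (M - j) * gb p M (Suc j) = (1 - p ^ (M - j)) * (pn p (Suc j) * pn p (M - Suc j) * gb p M (Suc j))"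
          by (simp add: e2 mult_ac)
        then show ?thesis using IH2 by simp
      qed
      also have "(1 - p ^ Suc j) * pn p M + p ^ Suc j * ((1 - p ^ (M - j)) * pn p M) = pn p (Suc M)"
      proof -
        have h: "p ^ Suc j * p ^ (M - j) = p ^ Suc M" using jM
          by (simp flip: power_add)
        have "(1 - p ^ Suc j) * pn p M + p ^ Suc j * ((1 - p ^ (M - j)) * pn p M)
             = pn p M - (p ^ Suc j * p ^ (M - j)) * pn p M" by (simp add: algebra_simps)
        also have "\<dots> = pn p (Suc M)" unfolding h by (simp add: pn_Suc algebra_simps)
        finally show ?thesis .
      qed
      finally show ?thesis using Suc by simp
    qed
  qed
qed

lemma qbinom: "(\<Prod>i<M. 1 + x * p ^ i) = (\<Sum>k\<le>M. gb p M k * p ^ (k * (k - 1) div 2) * x ^ k)"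
proof (induction M arbitrary: x)
  case 0 then show ?case by simp
next
  case (Suc M)
  have "(\<Prod>i<Suc M. 1 + x * p ^ i) = (1 + x) * (\<Prod>i<M. 1 + (x * p) * p ^ i)"
    by (subst prod.lessThan_Suc_shift) (simp add: mult.assoc)
  also have "\<dots> = (1 + x) * (\<Sum>k\<le>M. gb p M k * p ^ (k * (k - 1) div 2) * (x * p) ^ k)"
    by (simp add: Suc.IH)
  also have "\<dots> = (\<Sum>k\<le>M. gb p M k * p ^ (k * (k - 1) div 2 + k) * x ^ k)
       + (\<Sum>k\<le>M. gb p M k * p ^ (k * (k - 1) div 2 + k) * x ^ Suc k)"
  proof -
    have A: "(1 + x) * (\<Sum>k\<le>M. gb p M k * p ^ (k * (k - 1) div 2) * (x * p) ^ k)
       = (\<Sum>k\<le>M. gb p M k * p ^ (k * (k - 1) div 2) * (x * p) ^ k)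
       + (\<Sum>k\<le>M. x * (gb p M k * p ^ (k * (k - 1) div 2) * (x * p) ^ k))"
      by (simp only: sum_distrib_left distrib_right mult_1 sum.distrib)
    have B: "\<And>k. gb p M k * p ^ (k * (k - 1) div 2) * (x * p) ^ k = gb p M k * p ^ (k * (k - 1) div 2 + k) * x ^ k"
      by (simp add: power_add power_mult_distrib mult_ac)
    have C: "\<And>k. x * (gb p M k * p ^ (k * (k - 1) div 2) * (x * p) ^ k) = gb p M k * p ^ (k * (k - 1) div 2 + k) * x ^ Suc k"
      by (simp add: power_add power_mult_distrib mult_ac)
    show ?thesis by (subst A, simp only: C, simp only: B)
  qed
  also have "(\<Sum>k\<le>M. gb p M k * p ^ (k * (k - 1) div 2 + k) * x ^ k)
      = 1 + (\<Sum>k\<le>M. p ^ Suc k * gb p M (Suc k) * p ^ (Suc k * (Suc k - 1) div 2) * x ^ Suc k)"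
  proof -
    have D1: "(\<Sum>k\<le>Suc M. gb p M k * p ^ (k * (k - 1) div 2 + k) * x ^ k)
        = (\<Sum>k\<le>M. gb p M k * p ^ (k * (k - 1) div 2 + k) * x ^ k)"
      by (simp add: gb_gt)
    have D2: "(\<Sum>k\<le>Suc M. gb p M k * p ^ (k * (k - 1) div 2 + k) * x ^ k)
        = 1 + (\<Sum>k\<le>M. gb p M (Suc k) * p ^ (Suc k * (Suc k - 1) div 2 + Suc k) * x ^ Suc k)"
      by (subst sum.atMost_Suc_shift) simp
    have D3: "\<And>k. gb p M (Suc k) * p ^ (Suc k * (Suc k - 1) div 2 + Suc k) * x ^ Suc k
       = p ^ Suc k * gb p M (Suc k) * p ^ (Suc k * (Suc k - 1) div 2) * x ^ Suc k"
      by (simp add: power_add mult_ac)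
    have "(\<Sum>k\<le>M. gb p M k * p ^ (k * (k - 1) div 2 + k) * x ^ k)
        = 1 + (\<Sum>k\<le>M. gb p M (Suc k) * p ^ (Suc k * (Suc k - 1) div 2 + Suc k) * x ^ Suc k)"
      using D1 D2 by linarith
    then show ?thesis by (simp only: D3)
  qed
  also have "1 + (\<Sum>k\<le>M. p ^ Suc k * gb p M (Suc k) * p ^ (Suc k * (Suc k - 1) div 2) * x ^ Suc k)
      + (\<Sum>k\<le>M. gb p M k * p ^ (k * (k - 1) div 2 + k) * x ^ Suc k)
      = (\<Sum>k\<le>Suc M. gb p (Suc M) k * p ^ (k * (k - 1) div 2) * x ^ k)"
  proof -
    have "(\<Sum>k\<le>Suc M. gb p (Suc M) k * p ^ (k * (k - 1) div 2) * x ^ k)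
       = 1 + (\<Sum>k\<le>M. gb p (Suc M) (Suc k) * p ^ (Suc k * (Suc k - 1) div 2) * x ^ Suc k)"
      by (subst sum.atMost_Suc_shift) simp
    also have "(\<Sum>k\<le>M. gb p (Suc M) (Suc k) * p ^ (Suc k * (Suc k - 1) div 2) * x ^ Suc k)
       = (\<Sum>k\<le>M. p ^ Suc k * gb p M (Suc k) * p ^ (Suc k * (Suc k - 1) div 2) * x ^ Suc k
           + gb p M k * p ^ (k * (k - 1) div 2 + k) * x ^ Suc k)"
    proof (rule sum.cong[OF refl])
      fix k
      show "gb p (Suc M) (Suc k) * p ^ (Suc k * (Suc k - 1) div 2) * x ^ Suc k
         = p ^ Suc k * gb p M (Suc k) * p ^ (Suc k * (Suc k - 1) div 2) * x ^ Suc k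
           + gb p M k * p ^ (k * (k - 1) div 2 + k) * x ^ Suc k"
        by (simp only: gb.simps T_Suc) (simp add: algebra_simps)
    qed
    finally show ?thesis by (simp add: sum.distrib)
  qed
  finally show ?case .
qed



definition tri :: "nat \<Rightarrow> nat" where "tri n = n * (n - 1) div 2"

lemma tri2: "2 * tri n = n * (n - 1)"
proof -
  have "even (n * (n - 1))" by (cases "even n") auto
  then show ?thesis unfolding tri_def by simp
qed

lemma tri_eqI: "n * (n - 1) + 2 * a = m * (m - 1) + 2 * b \<Longrightarrow> tri n + a = tri m + b"
proof -
  assume h: "n * (n - 1) + 2 * a = m * (m - 1) + 2 * b"
  have "2 * (tri n + a) = 2 * (tri m + b)" using h tri2[of n] tri2[of m] by simp
  then show ?thesis by simp
qed

lemma E1: "tri (N + 1 + j) + tri (N + 1) = tri (j + 1) + N * (N + 1 + j)"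
proof -
  have "tri (N + 1 + j) + tri (N + 1) + 0 = tri (j + 1) + N * (N + 1 + j) + 0"
  proof -
    have a: "2 * tri (N + 1 + j) = (N + 1 + j) * (N + j)" using tri2[of "N+1+j"] by simp
    have b: "2 * tri (N + 1) = (N + 1) * N" using tri2[of "N+1"] by simp
    have c: "2 * tri (j + 1) = (j + 1) * j" using tri2[of "j+1"] by simp
    have "2 * (tri (N + 1 + j) + tri (N + 1)) = 2 * (tri (j + 1) + N * (N + 1 + j))"
      unfolding add_mult_distrib2 a b c by (simp add: algebra_simps)
    then show ?thesis by simp
  qed
  then show ?thesis by simp
qed

lemma E2: "j \<le> N \<Longrightarrow> tri (N - j) + tri (N + 1) = tri (j + 1) + N * (N - j)"
proof -
  assume jN: "j \<le> N"
  obtain d where d: "N = j + d" using jN le_Suc_ex by blast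
  have a: "2 * tri d = d * (d - 1)" using tri2 by simp
  have b: "2 * tri (j + d + 1) = (j + d + 1) * (j + d)" using tri2[of "j+d+1"] by simp
  have c: "2 * tri (j + 1) = (j + 1) * j" using tri2[of "j+1"] by simp
  have "2 * (tri d + tri (j + d + 1)) = 2 * (tri (j + 1) + (j + d) * d)"
  proof (cases d)
    case 0 then show ?thesis unfolding add_mult_distrib2 a b c by (simp add: algebra_simps)
  next
    case (Suc e) then show ?thesis unfolding add_mult_distrib2 a b c by (simp add: algebra_simps)
  qed
  then show ?thesis using d by simp
qed

lemma prod_split_nat: fixes a b :: nat shows "(\<Prod>i<a + b. f i) = (\<Prod>i<a. f i) * (\<Prod>i<b. f (a + i))"
  by (induction b) (auto simp: mult_ac)

lemma sum_split_nat: fixes a b :: nat shows "(\<Sum>i<a + b. f i) = (\<Sum>i<a. f i) + (\<Sum>i<b. f (a + i))"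
  by (induction b) (auto simp: add_ac)

lemma prod_rev_nat: "(\<Prod>i<N. f i) = (\<Prod>i<N. f (N - Suc i))"
  by (rule prod.reindex_bij_witness[where i="\<lambda>i. N - Suc i" and j="\<lambda>i. N - Suc i"]) auto

lemma sum_rev_nat: "(\<Sum>i<N. f i) = (\<Sum>i<N. f (N - Suc i))"
  by (rule sum.reindex_bij_witness[where i="\<lambda>i. N - Suc i" and j="\<lambda>i. N - Suc i"]) auto

lemma sum_Suc_id: "(\<Sum>i<N. Suc i) = tri (N + 1)"
proof (induction N)
  case 0 then show ?case by (simp add: tri_def)
next
  case (Suc N)
  have "tri (Suc N + 1) = tri (N + 1) + Suc N"
    using tri_eqI[of "Suc N + 1" 0 "N + 1" "Suc N"] by (simp add: algebra_simps)
  then show ?case using Suc by simp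
qed

lemma pn_pos: assumes "0 \<le> p" "p < 1" shows "pn p n > 0"
  unfolding pn_def
proof (intro prod_pos)
  fix i show "0 < 1 - p ^ Suc i" using power_Suc_less_one[of p i] assms by (cases "p = 0") auto
qed

lemma gb_sym: assumes "0 \<le> p" "p < 1" "k \<le> M" shows "gb p M (M - k) = gb p M k"
proof -
  have "pn p k * pn p (M - k) * gb p M k = pn p M" using gb_closed assms by simp
  moreover have "pn p (M - k) * pn p (M - (M - k)) * gb p M (M - k) = pn p M" using gb_closed[of "M-k" M p] by simp
  ultimately have "pn p k * pn p (M - k) * gb p M k = pn p k * pn p (M - k) * gb p M (M - k)"
    using assms by (simp add: mult_ac)
  moreover have "pn p k * pn p (M - k) \<noteq> 0" using pn_pos assms by (metis mult_pos_pos less_irrefl)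
  ultimately show ?thesis by simp
qed

lemma qbinom_tri: "(\<Prod>i<M. 1 + x * p ^ i) = (\<Sum>k\<le>M. gb p M k * p ^ tri k * x ^ k)"
  using qbinom unfolding tri_def .

lemma FJ:
  fixes p x :: real
  assumes p0: "0 < p" and p1: "p < 1" and x0: "x \<noteq> 0"
  shows "(\<Prod>i\<le>N. 1 + x * p ^ i) * (\<Prod>i<N. 1 + p ^ (i + 1) / x)
       = (\<Sum>j\<le>N. gb p (2 * N + 1) (N + 1 + j) * p ^ tri (j + 1) * (x ^ (j + 1) + 1 / x ^ j))"
proof -
  define y where "y = x / p ^ N"
  define c where "c = x ^ N / p ^ tri (N + 1)"
  have pN: "p ^ N \<noteq> 0" using p0 by simp
  have c0: "c \<noteq> 0" using x0 p0 by (simp add: c_def)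
  have L: "(\<Prod>i<2 * N + 1. 1 + y * p ^ i) = c * ((\<Prod>i\<le>N. 1 + x * p ^ i) * (\<Prod>i<N. 1 + p ^ (i + 1) / x))"
  proof -
    have "(\<Prod>i<2 * N + 1. 1 + y * p ^ i) = (\<Prod>i<N. 1 + y * p ^ i) * (\<Prod>i<N + 1. 1 + y * p ^ (N + i))"
      using prod_split_nat[of "\<lambda>i. 1 + y * p ^ i" N "N + 1"] by (simp add: mult_2)
    also have "(\<Prod>i<N + 1. 1 + y * p ^ (N + i)) = (\<Prod>i\<le>N. 1 + x * p ^ i)"
    proof -
      have "\<And>i. y * p ^ (N + i) = x * p ^ i" using pN by (simp add: y_def power_add field_simps)
      then show ?thesis by (simp add: lessThan_Suc_atMost[symmetric])
    qed
    also have "(\<Prod>i<N. 1 + y * p ^ i) = (\<Prod>i<N. (x / p ^ (i + 1)) * (1 + p ^ (i + 1) / x))"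
    proof -
      have "(\<Prod>i<N. 1 + y * p ^ i) = (\<Prod>i<N. 1 + y * p ^ (N - Suc i))" by (rule prod_rev_nat)
      also have "\<dots> = (\<Prod>i<N. (x / p ^ (i + 1)) * (1 + p ^ (i + 1) / x))"
      proof (rule prod.cong[OF refl])
        fix i assume "i \<in> {..<N}"
        then have "p ^ (N - Suc i) * p ^ (i + 1) = p ^ N" by (subst power_add[symmetric]) simp
        then have "y * p ^ (N - Suc i) = x / p ^ (i + 1)" using pN p0
          by (simp add: y_def field_simps)
        then show "1 + y * p ^ (N - Suc i) = (x / p ^ (i + 1)) * (1 + p ^ (i + 1) / x)"
          using x0 p0 by (simp add: field_simps)
      qed
      finally show ?thesis .
    qed
    also have "(\<Prod>i<N. (x / p ^ (i + 1)) * (1 + p ^ (i + 1) / x)) = c * (\<Prod>i<N. 1 + p ^ (i + 1) / x)"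
    proof -
      have "(\<Prod>i<N. x / p ^ (i + 1)) = x ^ N / (\<Prod>i<N. p ^ (i + 1))" by (simp add: prod_dividef)
      also have "(\<Prod>i<N. p ^ (i + 1)) = p ^ tri (N + 1)"
        using power_sum[of p "\<lambda>i. i + 1" "{..<N}"] sum_Suc_id[of N] by simp
      finally have cc: "(\<Prod>i<N. x / p ^ (i + 1)) = c" by (simp add: c_def)
      show ?thesis unfolding prod.distrib cc ..
    qed
    finally show ?thesis by (simp add: mult_ac)
  qed
  have R: "(\<Sum>k\<le>2 * N + 1. gb p (2 * N + 1) k * p ^ tri k * y ^ k)
      = c * (\<Sum>j\<le>N. gb p (2 * N + 1) (N + 1 + j) * p ^ tri (j + 1) * (x ^ (j + 1) + 1 / x ^ j))"
  proof -
    define f where "f k = gb p (2 * N + 1) k * p ^ tri k * y ^ k" for k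
    have "(\<Sum>k\<le>2 * N + 1. f k) = (\<Sum>k<(N + 1) + (N + 1). f k)"
      by (simp add: lessThan_Suc_atMost[symmetric] mult_2)
    also have "\<dots> = (\<Sum>k<N + 1. f k) + (\<Sum>j<N + 1. f (N + 1 + j))" by (rule sum_split_nat)
    also have "(\<Sum>k<N + 1. f k) = (\<Sum>j<N + 1. f (N - j))"
      using sum_rev_nat[of f "N + 1"] by simp
    also have "(\<Sum>j<N + 1. f (N - j)) + (\<Sum>j<N + 1. f (N + 1 + j))
        = (\<Sum>j\<le>N. f (N - j) + f (N + 1 + j))"
      by (simp add: sum.distrib lessThan_Suc_atMost[symmetric])
    also have "\<dots> = (\<Sum>j\<le>N. c * (gb p (2 * N + 1) (N + 1 + j) * p ^ tri (j + 1) * (x ^ (j + 1) + 1 / x ^ j)))"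
    proof (rule sum.cong[OF refl])
      fix j assume "j \<in> {..N}"
      then have jN: "j \<le> N" by simp
      have g: "gb p (2 * N + 1) (N - j) = gb p (2 * N + 1) (N + 1 + j)"
      proof -
        have "2 * N + 1 - (N - j) = N + 1 + j" using jN by simp
        then show ?thesis using gb_sym[of p "N - j" "2 * N + 1"] p0 p1 jN by simp
      qed
      have e1: "p ^ tri (N + 1 + j) * p ^ tri (N + 1) = p ^ tri (j + 1) * p ^ (N * (N + 1 + j))"
        using E1[of N j] by (simp flip: power_add)
      have e2: "p ^ tri (N - j) * p ^ tri (N + 1) = p ^ tri (j + 1) * p ^ (N * (N - j))"
        using E2[OF jN] by (simp flip: power_add)
      have pD1: "p ^ (N * (N + 1 + j)) \<noteq> 0" "p ^ tri (N + 1) \<noteq> 0" "p ^ (N * (N - j)) \<noteq> 0"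
        using p0 by auto
      have f1: "f (N + 1 + j) = c * (gb p (2 * N + 1) (N + 1 + j) * p ^ tri (j + 1) * x ^ (j + 1))"
      proof -
        have Y: "y ^ (N + 1 + j) = x ^ N * x ^ (j + 1) / p ^ (N * (N + 1 + j))"
          unfolding y_def power_divide power_mult power_add[symmetric] by (simp add: ac_simps)
        have A: "p ^ tri (N + 1 + j) = p ^ tri (j + 1) * p ^ (N * (N + 1 + j)) / p ^ tri (N + 1)"
          using e1 pD1 by (simp add: field_simps)
        show ?thesis unfolding f_def c_def Y A using pD1 p0
          by (simp add: field_simps del: gb.simps)
      qed
      have f2: "f (N - j) = c * (gb p (2 * N + 1) (N + 1 + j) * p ^ tri (j + 1) * (1 / x ^ j))"
      proof -
        have "y ^ (N - j) = x ^ (N - j) / p ^ (N * (N - j))"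
          by (simp only: y_def power_divide power_mult)
        moreover have "x ^ (N - j) = x ^ N / x ^ j" using jN x0 by (simp add: power_diff)
        ultimately have Y: "y ^ (N - j) = x ^ N / x ^ j / p ^ (N * (N - j))" by simp
        have A: "p ^ tri (N - j) = p ^ tri (j + 1) * p ^ (N * (N - j)) / p ^ tri (N + 1)"
          using e2 pD1 by (simp add: field_simps)
        show ?thesis unfolding f_def c_def Y A g using pD1 x0 p0
          by (simp add: field_simps del: gb.simps)
      qed
      show "f (N - j) + f (N + 1 + j) = c * (gb p (2 * N + 1) (N + 1 + j) * p ^ tri (j + 1) * (x ^ (j + 1) + 1 / x ^ j))"
        unfolding f1 f2 by (simp add: algebra_simps)
    qed
    also have "\<dots> = c * (\<Sum>j\<le>N. gb p (2 * N + 1) (N + 1 + j) * p ^ tri (j + 1) * (x ^ (j + 1) + 1 / x ^ j))"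
      by (simp add: sum_distrib_left)
    finally show ?thesis unfolding f_def .
  qed
  have "c * ((\<Prod>i\<le>N. 1 + x * p ^ i) * (\<Prod>i<N. 1 + p ^ (i + 1) / x))
      = c * (\<Sum>j\<le>N. gb p (2 * N + 1) (N + 1 + j) * p ^ tri (j + 1) * (x ^ (j + 1) + 1 / x ^ j))"
    using L R qbinom_tri[where M="2 * N + 1" and x=y and p=p] by simp
  then show ?thesis using c0 by simp
qed



declare gb.simps[simp del]

lemma geom_alt: "(1 + x) * (\<Sum>i<n. (- x) ^ i) = 1 - (- x) ^ n" for x :: real
  by (induction n) (auto simp: algebra_simps)

lemma FJac:
  fixes p :: real
  assumes p0: "0 < p" and p1: "p < 1"
  shows "pn p N ^ 2 = (\<Sum>j\<le>N. gb p (2 * N + 1) (N + 1 + j) * p ^ tri (j + 1) * ((-1) ^ j * (2 * real j + 1)))"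
proof -
  define R where "R x = (\<Prod>i<N. 1 + x * p ^ (i + 1)) * (\<Prod>i<N. 1 + p ^ (i + 1) / x)" for x :: real
  define S where "S x = (\<Sum>j\<le>N. gb p (2 * N + 1) (N + 1 + j) * p ^ tri (j + 1) * ((\<Sum>i<2 * j + 1. (- x) ^ i) / x ^ j))" for x :: real
  have RS: "R x = S x" if x0: "x \<noteq> 0" and x1: "x \<noteq> -1" for x
  proof -
    have "(1 + x) * R x = (\<Prod>i\<le>N. 1 + x * p ^ i) * (\<Prod>i<N. 1 + p ^ (i + 1) / x)"
    proof -
      have h: "(\<Prod>i\<le>N. 1 + x * p ^ i) = (1 + x) * (\<Prod>i<N. 1 + x * p ^ (i + 1))"
        unfolding lessThan_Suc_atMost[symmetric] prod.lessThan_Suc_shift by simp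
      show ?thesis unfolding R_def h by (simp only: mult.assoc)
    qed
    also have "\<dots> = (\<Sum>j\<le>N. gb p (2 * N + 1) (N + 1 + j) * p ^ tri (j + 1) * (x ^ (j + 1) + 1 / x ^ j))"
      by (rule FJ[OF p0 p1 x0])
    also have "\<dots> = (1 + x) * S x"
      unfolding S_def sum_distrib_left
    proof (rule sum.cong[OF refl])
      fix j
      have "(1 + x) * (\<Sum>i<2 * j + 1. (- x) ^ i) = 1 + x ^ (2 * j + 1)"
      proof -
        have "(- x) ^ (2 * j + 1) = - (x ^ (2 * j + 1))" by (rule power_minus_odd) simp
        then show ?thesis by (simp only: geom_alt)
      qed
      moreover have "x ^ (2 * j + 1) = x ^ (j + 1) * x ^ j" by (simp add: mult_2 flip: power_add)
      ultimately have h: "(1 + x) * ((\<Sum>i<2 * j + 1. (- x) ^ i) / x ^ j) = x ^ (j + 1) + 1 / x ^ j"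
        using x0 by (simp add: field_simps)
      then show "gb p (2 * N + 1) (N + 1 + j) * p ^ tri (j + 1) * (x ^ (j + 1) + 1 / x ^ j) =
         (1 + x) * (gb p (2 * N + 1) (N + 1 + j) * p ^ tri (j + 1) * ((\<Sum>i<2 * j + 1. (- x) ^ i) / x ^ j))"
        unfolding h[symmetric] by (simp only: ac_simps)
    qed
    finally show ?thesis using x1 by simp
  qed
  have ev: "\<forall>\<^sub>F x in at (-1::real). R x = S x"
  proof -
    have "\<forall>\<^sub>F x in at (-1::real). x \<noteq> -1 \<and> dist x (-1) < 1"
      using eventually_at[of "\<lambda>x. dist x (-1) < 1" "-1::real" UNIV] eventually_at_topological
      by (auto simp: eventually_at intro: exI[of _ 1])
    then show ?thesis
    proof (rule eventually_mono)
      fix x :: real assume "x \<noteq> -1 \<and> dist x (-1) < 1"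
      then have "x \<noteq> 0" "x \<noteq> -1" by (auto simp: dist_real_def)
      then show "R x = S x" by (rule RS)
    qed
  qed
  have cR: "(R \<longlongrightarrow> R (-1)) (at (-1))"
    unfolding R_def by (intro tendsto_intros) auto
  have cS: "(S \<longlongrightarrow> S (-1)) (at (-1))"
    unfolding S_def by (intro tendsto_intros) auto
  have "(S \<longlongrightarrow> R (-1)) (at (-1))" using cR ev by (rule Lim_transform_eventually)
  then have "R (-1) = S (-1)" using cS tendsto_unique by (metis trivial_limit_at)
  moreover have "R (-1) = pn p N ^ 2" unfolding R_def pn_def by (simp add: power2_eq_square)
  moreover have "S (-1) = (\<Sum>j\<le>N. gb p (2 * N + 1) (N + 1 + j) * p ^ tri (j + 1) * ((-1) ^ j * (2 * real j + 1)))"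
    unfolding S_def
  proof (rule sum.cong[OF refl])
    fix j
    have "(\<Sum>i<2 * j + 1. (- (-1::real)) ^ i) / (-1) ^ j = (-1) ^ j * (2 * real j + 1)"
      by (cases "even j") (auto simp: field_simps)
    then show "gb p (2 * N + 1) (N + 1 + j) * p ^ tri (j + 1) * ((\<Sum>i<2 * j + 1. (- (-1::real)) ^ i) / (-1) ^ j) =
         gb p (2 * N + 1) (N + 1 + j) * p ^ tri (j + 1) * ((-1) ^ j * (2 * real j + 1))" by simp
  qed
  ultimately show ?thesis by simp
qed



lemma conv_geom:
  fixes a b :: real
  assumes "\<bar>b\<bar> < 1"
  shows "convergent_prod (\<lambda>i. 1 + a * b ^ i)"
proof -
  have "summable (\<lambda>i. \<bar>a\<bar> * \<bar>b\<bar> ^ i)" using assms by (intro summable_mult summable_geometric) simp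
  then have "summable (\<lambda>i. norm ((1 + a * b ^ i) - 1))" by (simp add: abs_mult power_abs)
  then show ?thesis by (intro abs_convergent_prod_imp_convergent_prod summable_imp_abs_convergent_prod)
qed

lemma conv_geom':
  fixes a b :: real
  assumes "\<bar>b\<bar> < 1"
  shows "convergent_prod (\<lambda>i. 1 - a * b ^ i)"
  using conv_geom[OF assms, of "-a"] by simp

lemma prod_lim_lessThan: "convergent_prod f \<Longrightarrow> (\<lambda>n. \<Prod>i<n. f i) \<longlonglongrightarrow> prodinf f"
  for f :: "nat \<Rightarrow> real"
  using convergent_prod_LIMSEQ LIMSEQ_lessThan_iff_atMost by blast

definition PP :: "real \<Rightarrow> real" where "PP p = prodinf (\<lambda>i. 1 - p ^ (i + 1))"

context
  fixes p :: real
  assumes p0: "0 < p" and p1: "p < 1"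
begin

lemma PP_conv: "convergent_prod (\<lambda>i. 1 - p ^ (i + 1))"
  using conv_geom'[of p p] p0 p1 by (simp add: mult.commute)

lemma pn_lim: "pn p \<longlonglongrightarrow> PP p"
  using prod_lim_lessThan[OF PP_conv] unfolding pn_def PP_def by simp

lemma PP_pos: "PP p > 0"
  unfolding PP_def
proof (rule less_0_prodinf[OF PP_conv])
  fix i show "0 < 1 - p ^ (i + 1)" using power_Suc_less_one[of p i] p0 p1 by simp
qed

lemma PP_le_pn: "PP p \<le> pn p n"
proof -
  have "prodinf (\<lambda>i. 1 - p ^ (i + 1)) \<le> (\<Prod>i<n. 1 - p ^ (i + 1))"
  proof (rule prod_ge_prodinf)
  show "(\<lambda>i. 1 - p ^ (i + 1)) has_prod prodinf (\<lambda>i. 1 - p ^ (i + 1))"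
    using PP_conv convergent_prod_has_prod by blast
  fix i show "0 \<le> 1 - p ^ (i + 1)" using power_Suc_less_one[of p i] p0 p1 by simp
  show "1 - p ^ (i + 1) \<le> 1" using p0 by simp
  qed
  then show ?thesis unfolding PP_def pn_def by simp
qed

lemma pn_le1: "pn p n \<le> 1"
  unfolding pn_def
proof (rule prod_le_1)
  fix i show "0 \<le> 1 - p ^ Suc i \<and> 1 - p ^ Suc i \<le> 1"
    using p0 p1 power_Suc_less_one[of p i] by simp
qed

lemma pn_mono: "m \<le> n \<Longrightarrow> pn p n \<le> pn p m"
proof (induction n)
  case 0 then show ?case by simp
next
  case (Suc n)
  show ?case
  proof (cases "m = Suc n")
    case False
    then have "pn p n \<le> pn p m" using Suc by simp
    moreover have "pn p (Suc n) \<le> pn p n"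
      using pn_pos[of p n] p0 p1 by (simp add: pn_Suc mult_left_le)
    ultimately show ?thesis by simp
  qed simp
qed

lemma gb_nonneg: "0 \<le> gb p M k"
proof (cases "k \<le> M")
  case True
  have "pn p k * pn p (M - k) * gb p M k = pn p M" using gb_closed[OF True] .
  moreover have "pn p k * pn p (M - k) > 0" "pn p M > 0" using pn_pos p0 p1 by simp_all
  ultimately show ?thesis by (metis less_le zero_less_mult_pos)
qed (simp add: gb_gt)

lemma gb_bound: "gb p M k \<le> 1 / PP p"
proof (cases "k \<le> M")
  case True
  have h: "pn p k * pn p (M - k) * gb p M k = pn p M" using gb_closed[OF True] .
  have pk: "pn p k > 0" "pn p (M - k) > 0" using pn_pos p0 p1 by simp_all
  have "gb p M k = pn p M / (pn p k * pn p (M - k))" using h pk by (simp add: field_simps)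
  also have "\<dots> \<le> pn p k / (pn p k * pn p (M - k))"
    using pk pn_mono[OF True] by (intro divide_right_mono) simp_all
  also have "\<dots> = 1 / pn p (M - k)" using pk by simp
  also have "\<dots> \<le> 1 / PP p" using PP_le_pn PP_pos pk by (intro divide_left_mono) simp_all
  finally show ?thesis .
next
  case False then show ?thesis using PP_pos by (simp add: gb_gt)
qed

lemma gb_lim: "(\<lambda>N. gb p (2 * N + 1) (N + 1 + j)) \<longlonglongrightarrow> 1 / PP p"
proof -
  have e: "\<forall>\<^sub>F N in sequentially. pn p (2 * N + 1) / (pn p (N + 1 + j) * pn p (N - j)) = gb p (2 * N + 1) (N + 1 + j)"
  proof (rule eventually_sequentiallyI[of j])
    fix N assume "j \<le> N"
    then have "N + 1 + j \<le> 2 * N + 1" "2 * N + 1 - (N + 1 + j) = N - j" by auto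
    then have "pn p (N + 1 + j) * pn p (N - j) * gb p (2 * N + 1) (N + 1 + j) = pn p (2 * N + 1)"
      using gb_closed by metis
    moreover have pos: "pn p (N + 1 + j) * pn p (N - j) > 0" using pn_pos p0 p1 by simp
    ultimately show "pn p (2 * N + 1) / (pn p (N + 1 + j) * pn p (N - j)) = gb p (2 * N + 1) (N + 1 + j)"
      by (metis less_irrefl nonzero_mult_div_cancel_left)
  qed
  have l1: "(\<lambda>N. pn p (2 * N + 1)) \<longlonglongrightarrow> PP p"
    by (rule filterlim_compose[OF pn_lim]) (intro filterlim_subseq strict_monoI, simp)
  have l2: "(\<lambda>N. pn p (N + 1 + j)) \<longlonglongrightarrow> PP p"
    by (rule filterlim_compose[OF pn_lim]) (intro filterlim_subseq strict_monoI, simp)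
  have l3: "(\<lambda>N. pn p (N - j)) \<longlonglongrightarrow> PP p"
    by (rule filterlim_compose[OF pn_lim]) (rule filterlim_minus_const_nat_at_top)
  have "(\<lambda>N. pn p (2 * N + 1) / (pn p (N + 1 + j) * pn p (N - j))) \<longlonglongrightarrow> PP p / (PP p * PP p)"
    using PP_pos by (intro tendsto_intros l1 l2 l3) simp
  then have "(\<lambda>N. gb p (2 * N + 1) (N + 1 + j)) \<longlonglongrightarrow> PP p / (PP p * PP p)"
    using e by (rule Lim_transform_eventually)
  then show ?thesis using PP_pos by simp
qed

lemma summ_quad: assumes c: "0 \<le> c" shows "summable (\<lambda>j. (real j + 1) * p ^ tri (j + 1) * c ^ j)"
proof -
  have "(\<lambda>n. p ^ n * c) \<longlonglongrightarrow> 0 * c" using p0 p1 by (intro tendsto_intros LIMSEQ_power_zero) simp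
  then have "(\<lambda>n. p ^ n * c) \<longlonglongrightarrow> 0" by simp
  then have "\<forall>\<^sub>F n in sequentially. p ^ n * c < 1/4" by (rule order_tendstoD(2)) simp
  then obtain N0 where N0: "\<And>n. n \<ge> N0 \<Longrightarrow> p ^ n * c < 1/4" by (auto simp: eventually_sequentially)
  show ?thesis
  proof (rule summable_ratio_test[of "1/2" N0])
    fix n assume n: "n \<ge> N0"
    have t: "tri (Suc n + 1) = tri (n + 1) + (n + 1)"
      using tri_eqI[of "Suc n + 1" 0 "n + 1" "n + 1"] by (simp add: algebra_simps)
    have pc: "p ^ (n + 1) * c \<le> 1/4" using N0[of "n+1"] n by simp
    have "norm ((real (Suc n) + 1) * p ^ tri (Suc n + 1) * c ^ Suc n)
        = (real n + 2) * (p ^ tri (n + 1) * c ^ n) * (p ^ (n + 1) * c)"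
    proof -
      have t2: "p ^ tri (Suc (Suc n)) = p ^ tri (Suc n) * p ^ (n + 1)" using t by (simp add: power_add)
      show ?thesis using p0 c by (simp add: t2 abs_mult algebra_simps)
    qed
    also have "\<dots> \<le> (real n + 2) * (p ^ tri (n + 1) * c ^ n) * (1/4)"
      using pc p0 c by (intro mult_left_mono) simp_all
    also have "\<dots> \<le> 1/2 * ((real n + 1) * (p ^ tri (n + 1) * c ^ n))"
      using p0 c by (simp add: algebra_simps)
    also have "\<dots> = 1/2 * norm ((real n + 1) * p ^ tri (n + 1) * c ^ n)"
      using p0 c by (simp add: abs_mult)
    finally show "norm ((real (Suc n) + 1) * p ^ tri (Suc n + 1) * c ^ Suc n)
        \<le> 1/2 * norm ((real n + 1) * p ^ tri (n + 1) * c ^ n)" .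
  qed simp
qed

lemma tann:
  assumes u: "summable (\<lambda>j. \<bar>u j\<bar>)"
    and L: "(\<lambda>N. \<Sum>j\<le>N. gb p (2 * N + 1) (N + 1 + j) * u j) \<longlonglongrightarrow> L"
  shows "u sums (PP p * L)"
proof -
  define a where "a j N = (if j \<le> N then gb p (2 * N + 1) (N + 1 + j) * u j else 0)" for j N
  have lim: "\<And>j. (\<lambda>N. a j N) \<longlonglongrightarrow> u j / PP p"
  proof -
    fix j
    have "(\<lambda>N. gb p (2 * N + 1) (N + 1 + j) * u j) \<longlonglongrightarrow> 1 / PP p * u j"
      by (intro tendsto_intros gb_lim)
    moreover have "\<forall>\<^sub>F N in sequentially. gb p (2 * N + 1) (N + 1 + j) * u j = a j N"
      by (rule eventually_sequentiallyI[of j]) (simp add: a_def)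
    ultimately show "(\<lambda>N. a j N) \<longlonglongrightarrow> u j / PP p"
      using Lim_transform_eventually by fastforce
  qed
  have bound: "eventually (\<lambda>(j, N). norm (a j N) \<le> \<bar>u j\<bar> / PP p) (at_top \<times>\<^sub>F sequentially)"
  proof (rule always_eventually, clarify)
    fix j N
    have "norm (a j N) \<le> (1 / PP p) * \<bar>u j\<bar>"
      unfolding a_def using mult_right_mono[OF gb_bound abs_ge_zero] gb_nonneg PP_pos
      by (auto simp: abs_mult)
    then show "norm (a j N) \<le> \<bar>u j\<bar> / PP p" by simp
  qed
  have sM: "summable (\<lambda>j. \<bar>u j\<bar> / PP p)" using u by (rule summable_divide)
  have T: "((\<lambda>N. suminf (\<lambda>j. a j N)) \<longlonglongrightarrow> suminf (\<lambda>j. u j / PP p))"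
    using tannerys_theorem[OF lim bound sM] by simp
  have fin: "\<And>N. suminf (\<lambda>j. a j N) = (\<Sum>j\<le>N. gb p (2 * N + 1) (N + 1 + j) * u j)"
    by (subst suminf_finite[of "{..N}"]) (auto simp: a_def)
  have "suminf (\<lambda>j. u j / PP p) = L"
    using T L unfolding fin by (rule LIMSEQ_unique)
  moreover have su: "summable u" using u summable_rabs_cancel by blast
  ultimately have "suminf u = PP p * L" using PP_pos by (simp add: suminf_divide field_simps)
  then show ?thesis using summable_sums[OF su] by simp
qed

end



lemma JTP:
  fixes p x :: real
  assumes p0: "0 < p" and p1: "p < 1" and x0: "x \<noteq> 0"
  shows "(\<lambda>j. p ^ tri (j + 1) * (x ^ (j + 1) + 1 / x ^ j)) sums
           (PP p * (prodinf (\<lambda>i. 1 + x * p ^ i) * prodinf (\<lambda>i. 1 + p ^ (i + 1) / x)))"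
proof (rule tann[OF p0 p1])
  have s1: "summable (\<lambda>j. \<bar>x\<bar> * ((real j + 1) * p ^ tri (j + 1) * \<bar>x\<bar> ^ j))"
    using summ_quad[OF p0 p1, of "\<bar>x\<bar>"] by (intro summable_mult) simp
  have s2: "summable (\<lambda>j. (real j + 1) * p ^ tri (j + 1) * (1 / \<bar>x\<bar>) ^ j)"
    using summ_quad[OF p0 p1, of "1 / \<bar>x\<bar>"] by simp
  show "summable (\<lambda>j. \<bar>p ^ tri (j + 1) * (x ^ (j + 1) + 1 / x ^ j)\<bar>)"
  proof (rule summable_comparison_test'[OF summable_add[OF s1 s2]])
    fix j :: nat
    have "\<bar>p ^ tri (j + 1) * (x ^ (j + 1) + 1 / x ^ j)\<bar> \<le> p ^ tri (j + 1) * (\<bar>x\<bar> ^ (j + 1) + (1 / \<bar>x\<bar>) ^ j)"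
    proof -
      have "\<bar>x ^ (j + 1) + 1 / x ^ j\<bar> \<le> \<bar>x ^ (j + 1)\<bar> + \<bar>1 / x ^ j\<bar>" by (rule abs_triangle_ineq)
      also have "\<dots> = \<bar>x\<bar> ^ (j + 1) + (1 / \<bar>x\<bar>) ^ j" by (simp add: power_abs power_one_over abs_mult)
      finally have "\<bar>x ^ (j + 1) + 1 / x ^ j\<bar> \<le> \<bar>x\<bar> ^ (j + 1) + (1 / \<bar>x\<bar>) ^ j" .
      then show ?thesis using p0 by (simp add: abs_mult mult_left_mono)
    qed
    also have "\<dots> \<le> (real j + 1) * (p ^ tri (j + 1) * (\<bar>x\<bar> ^ (j + 1) + (1 / \<bar>x\<bar>) ^ j))"
    proof -
      have nn: "0 \<le> p ^ tri (j + 1) * (\<bar>x\<bar> ^ (j + 1) + (1 / \<bar>x\<bar>) ^ j)" using p0 by simp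
      then have "0 \<le> real j * (p ^ tri (j + 1) * (\<bar>x\<bar> ^ (j + 1) + (1 / \<bar>x\<bar>) ^ j))" by simp
      then show ?thesis by (simp add: distrib_right)
    qed
    also have "\<dots> = \<bar>x\<bar> * ((real j + 1) * p ^ tri (j + 1) * \<bar>x\<bar> ^ j) + (real j + 1) * p ^ tri (j + 1) * (1 / \<bar>x\<bar>) ^ j"
      by (simp add: algebra_simps)
    finally show "norm \<bar>p ^ tri (j + 1) * (x ^ (j + 1) + 1 / x ^ j)\<bar> \<le> \<bar>x\<bar> * ((real j + 1) * p ^ tri (j + 1) * \<bar>x\<bar> ^ j) + (real j + 1) * p ^ tri (j + 1) * (1 / \<bar>x\<bar>) ^ j"
      by simp
  qed
  have cA: "convergent_prod (\<lambda>i. 1 + x * p ^ i)" using conv_geom[of p x] p0 p1 by simp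
  have cB: "convergent_prod (\<lambda>i. 1 + p ^ (i + 1) / x)"
  proof -
    have "convergent_prod (\<lambda>i. 1 + (p / x) * p ^ i)" using conv_geom[of p "p / x"] p0 p1 by simp
    moreover have "(\<lambda>i. 1 + (p / x) * p ^ i) = (\<lambda>i. 1 + p ^ (i + 1) / x)" by (simp add: field_simps)
    ultimately show ?thesis by simp
  qed
  have lA: "(\<lambda>N. \<Prod>i\<le>N. 1 + x * p ^ i) \<longlonglongrightarrow> prodinf (\<lambda>i. 1 + x * p ^ i)"
    using convergent_prod_LIMSEQ[OF cA] .
  have lB: "(\<lambda>N. \<Prod>i<N. 1 + p ^ (i + 1) / x) \<longlonglongrightarrow> prodinf (\<lambda>i. 1 + p ^ (i + 1) / x)"
    using prod_lim_lessThan[OF cB] .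
  have "(\<lambda>N. (\<Prod>i\<le>N. 1 + x * p ^ i) * (\<Prod>i<N. 1 + p ^ (i + 1) / x)) \<longlonglongrightarrow>
         prodinf (\<lambda>i. 1 + x * p ^ i) * prodinf (\<lambda>i. 1 + p ^ (i + 1) / x)"
    by (rule tendsto_mult[OF lA lB])
  then show "(\<lambda>N. \<Sum>j\<le>N. gb p (2 * N + 1) (N + 1 + j) * (p ^ tri (j + 1) * (x ^ (j + 1) + 1 / x ^ j))) \<longlonglongrightarrow>
         prodinf (\<lambda>i. 1 + x * p ^ i) * prodinf (\<lambda>i. 1 + p ^ (i + 1) / x)"
    unfolding FJ[OF p0 p1 x0] by (simp add: mult.assoc)
qed

lemma Jacobi:
  fixes p :: real
  assumes p0: "0 < p" and p1: "p < 1"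
  shows "(\<lambda>j. (-1) ^ j * (2 * real j + 1) * p ^ tri (j + 1)) sums (PP p ^ 3)"
proof -
  have "(\<lambda>j. (-1) ^ j * (2 * real j + 1) * p ^ tri (j + 1)) sums (PP p * PP p ^ 2)"
  proof (rule tann[OF p0 p1])
    have s1: "summable (\<lambda>j. 2 * ((real j + 1) * p ^ tri (j + 1) * 1 ^ j))"
      using summ_quad[OF p0 p1, of 1] by (intro summable_mult) simp
    show "summable (\<lambda>j. \<bar>(-1) ^ j * (2 * real j + 1) * p ^ tri (j + 1)\<bar>)"
      by (rule summable_comparison_test'[OF s1]) (use p0 in \<open>simp add: abs_mult\<close>)
    have "(\<lambda>N. pn p N ^ 2) \<longlonglongrightarrow> PP p ^ 2" by (intro tendsto_intros pn_lim[OF p0 p1])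
    then show "(\<lambda>N. \<Sum>j\<le>N. gb p (2 * N + 1) (N + 1 + j) * ((-1) ^ j * (2 * real j + 1) * p ^ tri (j + 1))) \<longlonglongrightarrow> PP p ^ 2"
      unfolding FJac[OF p0 p1] by (simp add: mult_ac)
  qed
  then show ?thesis by (simp add: power3_eq_cube power2_eq_square mult.assoc)
qed



lemma abs_cmp_real:
  fixes f g :: "'a \<Rightarrow> real"
  assumes "g summable_on A" "\<And>x. x \<in> A \<Longrightarrow> \<bar>f x\<bar> \<le> \<bar>g x\<bar>"
  shows "f summable_on A"
proof -
  have "(\<lambda>x. norm (g x)) summable_on A" using assms(1) summable_on_iff_abs_summable_on_real by blast
  then have "(\<lambda>x. norm (f x)) summable_on A" by (rule summable_on_comparison_test) (use assms(2) in auto)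
  then show ?thesis using summable_on_iff_abs_summable_on_real by blast
qed

lemma has_sum_prod_real:
  fixes f :: "'a \<Rightarrow> real" and g :: "'b \<Rightarrow> real"
  assumes f: "(f has_sum F) A" and g: "(g has_sum G) B"
  shows "((\<lambda>(a, b). f a * g b) has_sum (F * G)) (A \<times> B)"
proof -
  have fa: "(\<lambda>a. \<bar>f a\<bar>) summable_on A"
    using has_sum_imp_summable[OF f] summable_on_iff_abs_summable_on_real by auto
  have ga: "(\<lambda>b. \<bar>g b\<bar>) summable_on B"
    using has_sum_imp_summable[OF g] summable_on_iff_abs_summable_on_real by auto
  have "(\<lambda>(a, b). \<bar>f a\<bar> * \<bar>g b\<bar>) summable_on Sigma A (\<lambda>_. B)"
  proof (rule summable_on_SigmaI[where g = "\<lambda>a. \<bar>f a\<bar> * infsum (\<lambda>b. \<bar>g b\<bar>) B"])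
    fix a assume "a \<in> A"
    show "((\<lambda>y. case (a, y) of (a, b) \<Rightarrow> \<bar>f a\<bar> * \<bar>g b\<bar>) has_sum \<bar>f a\<bar> * infsum (\<lambda>b. \<bar>g b\<bar>) B) B"
      using has_sum_cmult_right[OF has_sum_infsum[OF ga], of "\<bar>f a\<bar>"] by simp
  next
    show "(\<lambda>a. \<bar>f a\<bar> * infsum (\<lambda>b. \<bar>g b\<bar>) B) summable_on A"
      using summable_on_cmult_left[OF fa] by simp
  qed auto
  then have s: "(\<lambda>(a, b). f a * g b) summable_on A \<times> B"
    by (rule abs_cmp_real) (auto simp: abs_mult)
  show ?thesis
  proof (rule has_sum_SigmaI[OF _ _ s])
    fix a assume "a \<in> A"
    show "((\<lambda>y. case (a, y) of (a, b) \<Rightarrow> f a * g b) has_sum f a * G) B"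
      using has_sum_cmult_right[OF g, of "f a"] by simp
  next
    show "((\<lambda>a. f a * G) has_sum F * G) A" by (rule has_sum_cmult_left[OF f])
  qed
qed

lemma int_summable_on:
  fixes f :: "int \<Rightarrow> real"
  assumes s1: "summable (\<lambda>n. \<bar>f (int n)\<bar>)" and s2: "summable (\<lambda>n. \<bar>f (- int n)\<bar>)"
  shows "f summable_on UNIV"
proof -
  have U: "UNIV = range int \<union> range (\<lambda>n. - int (Suc n))"
  proof -
    { fix z :: int have "z \<in> range int \<union> range (\<lambda>n. - int (Suc n))"
      proof (cases "z \<ge> 0")
        case True then have "z = int (nat z)" by simp
        then show ?thesis by blast
      next
        case False then have "z = - int (Suc (nat (- z) - 1))" by simp
        then show ?thesis by blast
      qed }
    then show ?thesis by auto
  qed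
  have a: "f summable_on range int"
  proof -
    have "(f \<circ> int) summable_on UNIV" using norm_summable_imp_summable_on[of "f \<circ> int"] s1 by simp
    then show ?thesis by (subst summable_on_reindex) (auto simp: inj_on_def)
  qed
  have b: "f summable_on range (\<lambda>n. - int (Suc n))"
  proof -
    have "summable (\<lambda>n. \<bar>f (- int (Suc n))\<bar>)" using s2 summable_Suc_iff[of "\<lambda>n. \<bar>f (- int n)\<bar>"] by simp
    then have "(f \<circ> (\<lambda>n. - int (Suc n))) summable_on UNIV"
      using norm_summable_imp_summable_on[of "f \<circ> (\<lambda>n. - int (Suc n))"] by (simp add: o_def)
    then show ?thesis by (subst summable_on_reindex) (auto simp: inj_on_def)
  qed
  show ?thesis unfolding U by (rule summable_on_Un_disjoint[OF a b]) auto
qed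

lemma fold_has_sum:
  fixes t :: "int \<Rightarrow> real"
  assumes ts: "t summable_on UNIV" and S: "(\<lambda>j. t (int j + 1) + t (- int j)) sums S"
  shows "(t has_sum S) UNIV"
proof -
  define P where "P = range (\<lambda>j::nat. int j + 1)"
  define N where "N = range (\<lambda>j::nat. - int j)"
  have U: "UNIV = P \<union> N"
  proof -
    { fix z :: int have "z \<in> P \<union> N"
      proof (cases "z > 0")
        case True then have "z = int (nat z - 1) + 1" by simp
        then show ?thesis unfolding P_def by blast
      next
        case False then have "z = - int (nat (- z))" by simp
        then show ?thesis unfolding N_def by blast
      qed }
    then show ?thesis by auto
  qed
  have dj: "P \<inter> N = {}" unfolding P_def N_def by auto
  have hP: "(t has_sum infsum t P) P" using summable_on_subset_banach[OF ts] by (simp add: has_sum_infsum)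
  have hN: "(t has_sum infsum t N) N" using summable_on_subset_banach[OF ts] by (simp add: has_sum_infsum)
  have sP: "(\<lambda>j. t (int j + 1)) sums infsum t P"
  proof -
    have "((t \<circ> (\<lambda>j::nat. int j + 1)) has_sum infsum t P) UNIV"
      using hP unfolding P_def by (subst (asm) has_sum_reindex) (auto simp: inj_on_def)
    then show ?thesis by (auto dest: has_sum_imp_sums simp: o_def)
  qed
  have sN: "(\<lambda>j. t (- int j)) sums infsum t N"
  proof -
    have "((t \<circ> (\<lambda>j::nat. - int j)) has_sum infsum t N) UNIV"
      using hN unfolding N_def by (subst (asm) has_sum_reindex) (auto simp: inj_on_def)
    then show ?thesis by (auto dest: has_sum_imp_sums simp: o_def)
  qed
  have "S = infsum t P + infsum t N" using sums_add[OF sP sN] S sums_unique2 by blast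
  then show ?thesis unfolding U using has_sum_Un_disjoint[OF hP hN dj] by simp
qed



lemma summ_quad_int:
  fixes r :: real and A B :: int
  assumes r0: "0 < r" and r1: "r < 1" and A: "A \<ge> 1"
  shows "summable (\<lambda>n::nat. (real n + 1) * r powi (A * int n * int n + B * int n))"
proof -
  define c where "c = r powi B"
  have c0: "c > 0" using r0 by (simp add: c_def)
  have s: "summable (\<lambda>j. (real j + 1) * r ^ tri (j + 1) * c ^ j)" using summ_quad[OF r0 r1] c0 by simp
  show ?thesis
  proof (rule summable_comparison_test'[OF s])
    fix n :: nat
    have cB: "r powi (B * int n) = c ^ n" by (simp only: power_int_mult c_def power_int_of_nat)
    have e: "r powi (A * int n * int n + B * int n) = r powi (A * int n * int n) * c ^ n"
      using r0 cB by (simp add: power_int_add)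
    have le: "int (tri (n + 1)) \<le> A * int n * int n"
    proof -
      have "int (2 * tri (n + 1)) = int ((n + 1) * n)" using tri2[of "n+1"] by simp
      then have h2: "2 * int (tri (n + 1)) = (int n + 1) * int n" by (simp add: algebra_simps)
      have h3: "int n \<le> int n * int n"
      proof (cases "n = 0")
        case False
        then have "1 * int n \<le> int n * int n" by (intro mult_right_mono) simp_all
        then show ?thesis by simp
      qed simp
      have h4: "1 * (int n * int n) \<le> A * (int n * int n)" using A by (intro mult_right_mono) simp_all
      show ?thesis using h2 h3 h4 by (simp add: algebra_simps)
    qed
    have mono: "r powi (A * int n * int n) \<le> r ^ tri (n + 1)"
    proof -
      obtain m where m: "A * int n * int n = int (tri (n + 1)) + int m"
        using le zle_iff_zadd by blast
      have "r powi (A * int n * int n) = r ^ tri (n + 1) * r ^ m"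
        unfolding m using r0 by (simp add: power_int_add)
      also have "\<dots> \<le> r ^ tri (n + 1)" by (rule mult_left_le) (use r0 r1 power_le_one[of r m] in auto)
      finally show ?thesis .
    qed
    have "(real n + 1) * (r powi (A * int n * int n) * c ^ n) \<le> (real n + 1) * (r ^ tri (n + 1) * c ^ n)"
      by (intro mult_left_mono mult_right_mono mono) (use c0 in auto)
    then have "(real n + 1) * r powi (A * int n * int n + B * int n) \<le> (real n + 1) * r ^ tri (n + 1) * c ^ n"
      unfolding e by (simp add: mult.assoc)
    moreover have "0 \<le> (real n + 1) * r powi (A * int n * int n + B * int n)" using r0 by simp
    ultimately show "norm ((real n + 1) * r powi (A * int n * int n + B * int n)) \<le> (real n + 1) * r ^ tri (n + 1) * c ^ n"
      by simp
  qed
qed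

lemma summ_quad_Z:
  fixes r :: real and A B :: int
  assumes r0: "0 < r" and r1: "r < 1" and A: "A \<ge> 1"
  shows "(\<lambda>n::int. (1 + \<bar>of_int n\<bar>) * r powi (A * n * n + B * n)) summable_on UNIV"
proof (rule int_summable_on)
  have "summable (\<lambda>n::nat. (real n + 1) * r powi (A * int n * int n + B * int n))"
    using summ_quad_int[OF r0 r1 A, of B] .
  moreover have "\<And>n::nat. \<bar>(1 + \<bar>real_of_int (int n)\<bar>) * r powi (A * int n * int n + B * int n)\<bar> = (real n + 1) * r powi (A * int n * int n + B * int n)"
    using r0 by simp
  ultimately show "summable (\<lambda>n. \<bar>(1 + \<bar>real_of_int (int n)\<bar>) * r powi (A * int n * int n + B * int n)\<bar>)"
    by simp
  have "summable (\<lambda>n::nat. (real n + 1) * r powi (A * int n * int n + (- B) * int n))"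
    using summ_quad_int[OF r0 r1 A, of "-B"] .
  moreover have "\<And>n::nat. \<bar>(1 + \<bar>real_of_int (- int n)\<bar>) * r powi (A * (- int n) * (- int n) + B * (- int n))\<bar>
      = (real n + 1) * r powi (A * int n * int n + (- B) * int n)"
    using r0 by simp
  ultimately show "summable (\<lambda>n. \<bar>(1 + \<bar>real_of_int (- int n)\<bar>) * r powi (A * (- int n) * (- int n) + B * (- int n))\<bar>)"
    by simp
qed



lemma qpoch_conv: "\<bar>b\<bar> < 1 \<Longrightarrow> convergent_prod (\<lambda>i. 1 - a * b ^ i)" for a b :: real
  by (rule conv_geom')

lemma qpoch_lim: "\<bar>b\<bar> < 1 \<Longrightarrow> (\<lambda>n. \<Prod>i<n. 1 - a * b ^ i) \<longlonglongrightarrow> qpoch_inf a b" for a b :: real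
  unfolding qpoch_inf_def by (rule prod_lim_lessThan[OF qpoch_conv])

lemma qpoch_split:
  fixes Q :: real
  assumes Q: "\<bar>Q\<bar> < 1" and k: "k > 0"
  shows "qpoch_inf Q Q = (\<Prod>r<k. qpoch_inf (Q ^ (r + 1)) (Q ^ k))"
proof -
  have Qk: "\<bar>Q ^ k\<bar> < 1" using Q k by (simp add: power_abs power_less_one_iff)
  have fin: "(\<Prod>i<N * k. 1 - Q * Q ^ i) = (\<Prod>r<k. \<Prod>n<N. 1 - Q ^ (r + 1) * (Q ^ k) ^ n)" for N
  proof -
    have "(\<Prod>i<N * k. 1 - Q * Q ^ i) = (\<Prod>n<N. \<Prod>i\<in>{n * k..<n * k + k}. 1 - Q * Q ^ i)"
      by (rule prod.nat_group[symmetric])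
    also have "\<dots> = (\<Prod>n<N. \<Prod>r<k. 1 - Q ^ (r + 1) * (Q ^ k) ^ n)"
    proof (rule prod.cong[OF refl])
      fix n
      have "(\<Prod>i\<in>{n * k..<n * k + k}. 1 - Q * Q ^ i) = (\<Prod>r<k. 1 - Q * Q ^ (n * k + r))"
        by (rule prod.reindex_bij_witness[where i="\<lambda>r. n * k + r" and j="\<lambda>i. i - n * k"]) auto
      also have "\<dots> = (\<Prod>r<k. 1 - Q ^ (r + 1) * (Q ^ k) ^ n)"
        by (intro prod.cong refl) (simp add: power_add power_mult mult_ac)
      finally show "(\<Prod>i\<in>{n * k..<n * k + k}. 1 - Q * Q ^ i) = (\<Prod>r<k. 1 - Q ^ (r + 1) * (Q ^ k) ^ n)" .
    qed
    also have "\<dots> = (\<Prod>r<k. \<Prod>n<N. 1 - Q ^ (r + 1) * (Q ^ k) ^ n)" by (rule prod.swap)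
    finally show ?thesis .
  qed
  have l1: "(\<lambda>N. \<Prod>i<N * k. 1 - Q * Q ^ i) \<longlonglongrightarrow> qpoch_inf Q Q"
  proof -
    have "filterlim (\<lambda>N. N * k) at_top at_top" using k
      by (intro filterlim_subseq strict_monoI) simp
    then show ?thesis by (rule filterlim_compose[OF qpoch_lim[OF Q]])
  qed
  have l2: "(\<lambda>N. \<Prod>r<k. \<Prod>n<N. 1 - Q ^ (r + 1) * (Q ^ k) ^ n) \<longlonglongrightarrow> (\<Prod>r<k. qpoch_inf (Q ^ (r + 1)) (Q ^ k))"
    by (intro tendsto_prod qpoch_lim[OF Qk])
  show ?thesis using LIMSEQ_unique[OF l1 l2[folded fin]] .
qed

definition sg :: "int \<Rightarrow> real" where "sg a = (if even a then 1 else -1)"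

lemma sg_add: "sg (a + b) = sg a * sg b" unfolding sg_def by auto
lemma sg_minus[simp]: "sg (- a) = sg a" unfolding sg_def by auto
lemma sg_abs[simp]: "\<bar>sg a\<bar> = 1" unfolding sg_def by auto
lemma sg_nat: "sg (int j) = (-1) ^ j" unfolding sg_def by (auto simp: even_of_nat_iff)
lemma sg_0[simp]: "sg 0 = 1" unfolding sg_def by auto
lemma sg_1[simp]: "sg 1 = -1" unfolding sg_def by auto
lemma sg_3: "sg (3 * a) = sg a" unfolding sg_def by auto
lemma sg_sq: "sg a * sg a = 1" unfolding sg_def by auto



lemma powi_nat_eq: "e = int n \<Longrightarrow> q powi e = q ^ n" for q :: real
  by simp

lemma pow_tri: "(q ^ k) ^ tri (j + 1) = (q :: real) ^ (k * (j * j + j) div 2)"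
proof -
  have "2 * tri (j + 1) = j * j + j" using tri2[of "j+1"] by (simp add: algebra_simps)
  then have "k * (j * j + j) div 2 = k * tri (j + 1)" by (metis mult.left_commute nonzero_mult_div_cancel_left zero_neq_numeral)
  then show ?thesis by (simp add: power_mult)
qed

definition phiT :: "real \<Rightarrow> int \<Rightarrow> real" where "phiT q a = sg a * q powi (a * a)"
definition JT :: "real \<Rightarrow> int \<Rightarrow> real" where "JT q b = of_int b * sg b * q powi (2 * b * b + 2 * b)"
definition ET :: "real \<Rightarrow> int \<Rightarrow> real" where "ET q c = sg c * q powi (6 * c * c - 2 * c)"
definition FT :: "real \<Rightarrow> int \<Rightarrow> real" where "FT q m = of_int (3 * m + 1) * q powi (3 * m * m + 2 * m)"

lemma le_1abs: "0 \<le> (x::real) \<Longrightarrow> x \<le> (1 + \<bar>y\<bar>) * x"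
proof -
  assume "0 \<le> x" then have "0 \<le> \<bar>y\<bar> * x" by simp
  then show ?thesis by (simp add: distrib_right)
qed

lemma le_1abs': "0 \<le> (x::real) \<Longrightarrow> \<bar>y\<bar> * x \<le> (1 + \<bar>y\<bar>) * x"
  by (simp add: distrib_right)

context
  fixes q :: real
  assumes q0: "q \<noteq> 0" and q1: "\<bar>q\<bar> < 1"
begin

lemma summ_fam:
  fixes f :: "int \<Rightarrow> real" and A B :: int and K :: real
  assumes A: "A \<ge> 1" and K: "K \<ge> 0" and le: "\<And>n. \<bar>f n\<bar> \<le> K * ((1 + \<bar>of_int n\<bar>) * \<bar>q\<bar> powi (A * n * n + B * n))"
  shows "f summable_on UNIV"
proof (rule abs_cmp_real)
  have r0: "0 < \<bar>q\<bar>" using q0 by simp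
  show "(\<lambda>n. K * ((1 + \<bar>of_int n\<bar>) * \<bar>q\<bar> powi (A * n * n + B * n))) summable_on UNIV"
    by (intro summable_on_cmult_right summ_quad_Z[OF r0 q1 A])
  fix n
  show "\<bar>f n\<bar> \<le> \<bar>K * ((1 + \<bar>of_int n\<bar>) * \<bar>q\<bar> powi (A * n * n + B * n))\<bar>"
    using le[of n] K by (simp add: abs_mult)
qed

lemma phiT_summable: "phiT q summable_on UNIV"
  by (rule summ_fam[where A=1 and B=0 and K=1]) (auto simp: phiT_def abs_mult power_int_abs intro: le_1abs)

lemma JT_summable: "JT q summable_on UNIV"
  by (rule summ_fam[where A=2 and B=2 and K=1]) (auto simp: JT_def abs_mult power_int_abs intro: le_1abs')

lemma ET_summable: "ET q summable_on UNIV"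
  by (rule summ_fam[where A=6 and B="-2" and K=1]) (auto simp: ET_def abs_mult power_int_abs intro: le_1abs)

lemma FT_summable: "FT q summable_on UNIV"
proof (rule summ_fam[where A=3 and B=2 and K=3])
  fix n :: int
  have "\<bar>real_of_int (3 * n + 1)\<bar> \<le> 3 * (1 + \<bar>of_int n\<bar>)" by (cases "n \<ge> 0") (auto simp: abs_if)
  then show "\<bar>FT q n\<bar> \<le> 3 * ((1 + \<bar>of_int n\<bar>) * \<bar>q\<bar> powi (3 * n * n + 2 * n))"
    unfolding FT_def abs_mult power_int_abs
    by (metis mult.assoc mult_right_mono zero_le_power_int abs_ge_zero)
qed auto

lemma phi_prod: "(phiT q has_sum (qpoch_inf q (q ^ 2)) ^ 2 * qpoch_inf (q ^ 2) (q ^ 2)) UNIV"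
proof (rule fold_has_sum[OF phiT_summable])
  have p0: "0 < q ^ 2" using q0 by simp
  have p1: "q ^ 2 < 1" using q1 by (simp add: abs_square_less_1)
  have x0: "- q \<noteq> 0" using q0 by simp
  have J: "(\<lambda>j. (q ^ 2) ^ tri (j + 1) * ((- q) ^ (j + 1) + 1 / (- q) ^ j)) sums
           (PP (q ^ 2) * (prodinf (\<lambda>i. 1 + (- q) * (q ^ 2) ^ i) * prodinf (\<lambda>i. 1 + (q ^ 2) ^ (i + 1) / (- q))))"
    by (rule JTP[OF p0 p1 x0])
  have t: "(q ^ 2) ^ tri (j + 1) * ((- q) ^ (j + 1) + 1 / (- q) ^ j) = phiT q (int j + 1) + phiT q (- int j)" for j
  proof -
    have a: "(q ^ 2) ^ tri (j + 1) = q ^ (j * j + j)" using pow_tri[of q 2 j] by simp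
    have b: "phiT q (int j + 1) = (-1) ^ (j + 1) * q ^ ((j + 1) * (j + 1))"
    proof -
      have s1: "sg (int j + 1) = (-1) ^ (j + 1)" using sg_nat[of "j+1"] by (simp add: add.commute)
      have e1: "(int j + 1) * (int j + 1) = int ((j + 1) * (j + 1))" by (simp add: algebra_simps)
      show ?thesis unfolding phiT_def s1 e1 power_int_of_nat ..
    qed
    have c: "phiT q (- int j) = (-1) ^ j * q ^ (j * j)"
      unfolding phiT_def by (subst powi_nat_eq[of _ "j * j"]) (simp_all add: sg_nat)
    have d: "q ^ (j * j + j) * (- q) ^ (j + 1) = (-1) ^ (j + 1) * q ^ ((j + 1) * (j + 1))"
    proof -
      have "(j + 1) * (j + 1) = (j * j + j) + (j + 1)" by (simp add: algebra_simps)
      then show ?thesis by (simp add: power_add power_minus' mult_ac)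
    qed
    have e: "q ^ (j * j + j) * (1 / (- q) ^ j) = (-1) ^ j * q ^ (j * j)"
    proof -
      have "q ^ (j * j + j) = q ^ (j * j) * q ^ j" by (simp add: power_add)
      moreover have "1 / (- q) ^ j = (-1) ^ j / q ^ j" by (cases "even j") (simp_all add: power_minus')
      ultimately show ?thesis using q0 by simp
    qed
    show ?thesis unfolding a b c distrib_left d e ..
  qed
  have P: "PP (q ^ 2) = qpoch_inf (q ^ 2) (q ^ 2)"
    unfolding PP_def qpoch_inf_def by (intro prodinf_cong) (simp add: power_add power_mult_distrib mult_ac)
  have A: "prodinf (\<lambda>i. 1 + (- q) * (q ^ 2) ^ i) = qpoch_inf q (q ^ 2)"
    unfolding qpoch_inf_def by simp
  have B: "prodinf (\<lambda>i. 1 + (q ^ 2) ^ (i + 1) / (- q)) = qpoch_inf q (q ^ 2)"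
    unfolding qpoch_inf_def using q0 by (intro prodinf_cong) (simp add: power_add power2_eq_square field_simps)
  show "(\<lambda>j. phiT q (int j + 1) + phiT q (- int j)) sums ((qpoch_inf q (q ^ 2))\<^sup>2 * qpoch_inf (q ^ 2) (q ^ 2))"
    using J unfolding t P A B by (simp add: power2_eq_square mult_ac)
qed

end


lemma pow_tri2: "(q ^ (2 * k)) ^ tri (j + 1) = (q :: real) ^ (k * (j * j + j))"
  using pow_tri[of q "2 * k" j] by simp

lemma PP_qpoch: "PP p = qpoch_inf p p"
  unfolding PP_def qpoch_inf_def by (intro prodinf_cong) (simp add: mult_ac)

lemma sg_Suc: "sg (int j + 1) = - ((-1) ^ j)"
  using sg_nat[of "Suc j"] by (simp add: add.commute)

context
  fixes q :: real
  assumes q0: "q \<noteq> 0" and q1: "\<bar>q\<bar> < 1"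
begin

lemma E_prod: "(ET q has_sum qpoch_inf (q ^ 4) (q ^ 4)) UNIV"
proof (rule fold_has_sum[OF ET_summable[OF q0 q1]])
  have p0: "0 < q ^ 12" using q0 by (simp add: zero_less_power_eq)
  have p1: "q ^ 12 < 1" using power_less_one_iff[of "\<bar>q\<bar>" 12] q1 by simp
  have x0: "- (q ^ 4) \<noteq> 0" using q0 by simp
  have J: "(\<lambda>j. (q ^ 12) ^ tri (j + 1) * ((- (q ^ 4)) ^ (j + 1) + 1 / (- (q ^ 4)) ^ j)) sums
           (PP (q ^ 12) * (prodinf (\<lambda>i. 1 + (- (q ^ 4)) * (q ^ 12) ^ i) * prodinf (\<lambda>i. 1 + (q ^ 12) ^ (i + 1) / (- (q ^ 4)))))"
    by (rule JTP[OF p0 p1 x0])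
  have t: "(q ^ 12) ^ tri (j + 1) * ((- (q ^ 4)) ^ (j + 1) + 1 / (- (q ^ 4)) ^ j) = ET q (int j + 1) + ET q (- int j)" for j
  proof -
    have a: "(q ^ 12) ^ tri (j + 1) = q ^ (6 * (j * j + j))" using pow_tri2[of q 6 j] by simp
    have b: "ET q (int j + 1) = (-1) ^ (j + 1) * q ^ (6 * (j * j + j) + 4 * (j + 1))"
    proof -
      have e1: "6 * (int j + 1) * (int j + 1) - 2 * (int j + 1) = int (6 * (j * j + j) + 4 * (j + 1))"
        by (simp add: algebra_simps)
      show ?thesis unfolding ET_def e1 power_int_of_nat sg_Suc by simp
    qed
    have c: "ET q (- int j) = (-1) ^ j * q ^ (6 * (j * j) + 2 * j)"
    proof -
      have e1: "6 * (- int j) * (- int j) - 2 * (- int j) = int (6 * (j * j) + 2 * j)"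
        by (simp add: algebra_simps)
      show ?thesis unfolding ET_def e1 power_int_of_nat sg_minus sg_nat ..
    qed
    have d: "q ^ (6 * (j * j + j)) * (- (q ^ 4)) ^ (j + 1) = (-1) ^ (j + 1) * q ^ (6 * (j * j + j) + 4 * (j + 1))"
    proof -
      have h0: "(- (q ^ 4)) ^ (j + 1) = ((-1) * q ^ 4) ^ (j + 1)" by simp
      have h: "(- (q ^ 4)) ^ (j + 1) = (-1) ^ (j + 1) * q ^ (4 * (j + 1))"
        unfolding h0 power_mult_distrib power_mult ..
      show ?thesis unfolding h by (simp only: power_add mult_ac)
    qed
    have e: "q ^ (6 * (j * j + j)) * (1 / (- (q ^ 4)) ^ j) = (-1) ^ j * q ^ (6 * (j * j) + 2 * j)"
    proof -
      have "q ^ (6 * (j * j + j)) = q ^ (6 * (j * j) + 2 * j) * q ^ (4 * j)" by (simp add: algebra_simps flip: power_add)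
      moreover have "1 / (- (q ^ 4)) ^ j = (-1) ^ j / q ^ (4 * j)"
        by (cases "even j") (simp_all add: power_minus' power_mult)
      ultimately show ?thesis using q0 by simp
    qed
    show ?thesis unfolding a b c by (simp only: distrib_left[of "q ^ (6 * (j * j + j))"] d e)
  qed
  have P: "PP (q ^ 12) = qpoch_inf (q ^ 12) (q ^ 12)" by (rule PP_qpoch)
  have A: "prodinf (\<lambda>i. 1 + (- (q ^ 4)) * (q ^ 12) ^ i) = qpoch_inf (q ^ 4) (q ^ 12)"
    unfolding qpoch_inf_def by simp
  have B: "prodinf (\<lambda>i. 1 + (q ^ 12) ^ (i + 1) / (- (q ^ 4))) = qpoch_inf (q ^ 8) (q ^ 12)"
  proof -
    have "\<And>i. (q ^ 12) ^ (i + 1) / (q ^ 4) = q ^ 8 * (q ^ 12) ^ i"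
    proof -
      fix i :: nat
      have h: "(q ^ 12) ^ (i + 1) = q ^ 8 * (q ^ 12) ^ i * q ^ 4" by (simp add: power_add mult_ac flip: power_mult)
      have "(q ^ 12) ^ (i + 1) / (q ^ 4) = q ^ 8 * (q ^ 12) ^ i * q ^ 4 / q ^ 4" by (simp only: h)
      also have "\<dots> = q ^ 8 * (q ^ 12) ^ i" using q0 by simp
      finally show "(q ^ 12) ^ (i + 1) / (q ^ 4) = q ^ 8 * (q ^ 12) ^ i" .
    qed
    then show ?thesis unfolding qpoch_inf_def by (intro prodinf_cong) simp
  qed
  have S: "qpoch_inf (q ^ 4) (q ^ 4) = qpoch_inf (q ^ 4) (q ^ 12) * qpoch_inf (q ^ 8) (q ^ 12) * qpoch_inf (q ^ 12) (q ^ 12)"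
  proof -
    have Q: "\<bar>q ^ 4\<bar> < 1" using power_less_one_iff[of "\<bar>q\<bar>" 4] q1 by (simp add: power_abs)
    have "qpoch_inf (q ^ 4) (q ^ 4) = (\<Prod>r<3. qpoch_inf ((q ^ 4) ^ (r + 1)) ((q ^ 4) ^ 3))"
      by (rule qpoch_split[OF Q]) simp
    also have "\<dots> = qpoch_inf (q ^ 4) (q ^ 12) * qpoch_inf (q ^ 8) (q ^ 12) * qpoch_inf (q ^ 12) (q ^ 12)"
      by (simp add: numeral_3_eq_3 flip: power_mult)
    finally show ?thesis .
  qed
  show "(\<lambda>j. ET q (int j + 1) + ET q (- int j)) sums qpoch_inf (q ^ 4) (q ^ 4)"
    using J unfolding t P A B S by (simp add: mult_ac)
qed

lemma J_prod: "(JT q has_sum (qpoch_inf (q ^ 4) (q ^ 4)) ^ 3) UNIV"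
proof -
  define t where "t z = JT q (z - 1)" for z
  have p0: "0 < q ^ 4" using q0 by (simp add: zero_less_power_eq)
  have p1: "q ^ 4 < 1" using power_less_one_iff[of "\<bar>q\<bar>" 4] q1 by simp
  have ts: "t summable_on UNIV"
  proof -
    have "(JT q \<circ> (\<lambda>z. z - 1)) summable_on UNIV"
      using JT_summable[OF q0 q1] summable_on_reindex[of "\<lambda>z::int. z - 1" UNIV "JT q"]
      by (simp add: inj_on_def surj_def)
    then show ?thesis unfolding t_def o_def .
  qed
  have J: "(\<lambda>j. (-1) ^ j * (2 * real j + 1) * (q ^ 4) ^ tri (j + 1)) sums (PP (q ^ 4) ^ 3)"
    by (rule Jacobi[OF p0 p1])
  have tt: "(-1) ^ j * (2 * real j + 1) * (q ^ 4) ^ tri (j + 1) = t (int j + 1) + t (- int j)" for j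
  proof -
    have a: "(q ^ 4) ^ tri (j + 1) = q ^ (2 * (j * j + j))" using pow_tri2[of q 2 j] by simp
    have b: "t (int j + 1) = real j * (-1) ^ j * q ^ (2 * (j * j + j))"
    proof -
      have e1: "2 * int j * int j + 2 * int j = int (2 * (j * j + j))" by (simp add: algebra_simps)
      show ?thesis unfolding t_def JT_def by (simp add: e1 sg_nat del: of_nat_mult of_nat_add)
    qed
    have c: "t (- int j) = (real j + 1) * (-1) ^ j * q ^ (2 * (j * j + j))"
    proof -
      have e1: "2 * (- int j - 1) * (- int j - 1) + 2 * (- int j - 1) = int (2 * (j * j + j))" by (simp add: algebra_simps)
      have s: "sg (- int j - 1) = - ((-1) ^ j)" using sg_Suc[of j] sg_minus[of "int j + 1"] by simp
      show ?thesis unfolding t_def JT_def e1 power_int_of_nat s by (simp add: algebra_simps)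
    qed
    show ?thesis unfolding a b c by (simp add: algebra_simps)
  qed
  have "(t has_sum (qpoch_inf (q ^ 4) (q ^ 4)) ^ 3) UNIV"
  proof (rule fold_has_sum[OF ts])
    from J show "(\<lambda>j. t (int j + 1) + t (- int j)) sums (qpoch_inf (q ^ 4) (q ^ 4)) ^ 3"
      by (simp only: tt PP_qpoch)
  qed
  then show ?thesis
    by (subst has_sum_reindex_bij_witness[where i="\<lambda>z. z - 1" and j="\<lambda>z. z + 1" and h=t]) (auto simp: t_def)
qed

end


definition Tf :: "real \<Rightarrow> int \<times> int \<Rightarrow> real" where
  "Tf q x = (case x of (a, b) \<Rightarrow> of_int (2 * b - a) * sg (a + b) * q powi (a * a - 2 * a + 2 * b * b + 2 * b))"

lemma sg_diff: "sg (a - b) = sg a * sg b"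
  using sg_add[of a "-b"] by simp

context
  fixes q :: real
  assumes q0: "q \<noteq> 0" and q1: "\<bar>q\<bar> < 1"
begin

lemma pw: "q powi (a + b) = q powi a * q powi b"
  using q0 by (simp add: power_int_add)

lemma fA_sum: "((\<lambda>a. sg a * q powi (a * a - 2 * a)) has_sum (- (1 / q)) * ((qpoch_inf q (q ^ 2)) ^ 2 * qpoch_inf (q ^ 2) (q ^ 2))) UNIV"
proof -
  have h: "((\<lambda>a. phiT q (a - 1)) has_sum ((qpoch_inf q (q ^ 2)) ^ 2 * qpoch_inf (q ^ 2) (q ^ 2))) UNIV"
    using phi_prod[OF q0 q1]
    by (subst has_sum_reindex_bij_witness[where i="\<lambda>z. z + 1" and j="\<lambda>z. z - 1" and h="phiT q"]) auto
  have e: "sg a * q powi (a * a - 2 * a) = - (1 / q) * phiT q (a - 1)" for a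
  proof -
    have "(a - 1) * (a - 1) = (a * a - 2 * a) + 1" by (simp add: algebra_simps)
    then have "phiT q (a - 1) = - sg a * (q powi (a * a - 2 * a) * q)"
      unfolding phiT_def by (simp add: pw sg_diff)
    then show ?thesis using q0 by simp
  qed
  show ?thesis unfolding e by (rule has_sum_cmult_right[OF h])
qed

lemma fD_sum: "((\<lambda>b. sg b * q powi (2 * b * b + 2 * b)) has_sum 0) UNIV"
proof -
  define f where "f b = sg b * q powi (2 * b * b + 2 * b)" for b
  have fs: "f summable_on UNIV"
    by (rule summ_fam[OF q0 q1, where A=2 and B=2 and K=1]) (auto simp: f_def abs_mult power_int_abs intro: le_1abs)
  define V where "V = infsum f UNIV"
  have hV: "(f has_sum V) UNIV" using fs by (simp add: V_def)
  have "((\<lambda>b. - f b) has_sum V) UNIV"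
  proof (subst has_sum_reindex_bij_witness[where i="\<lambda>b. -1 - b" and j="\<lambda>b. -1 - b" and h=f and T=UNIV])
    fix b :: int
    have e1: "q powi (2 * (-1 - b) * (-1 - b) + 2 * (-1 - b)) = q powi (2 * b * b + 2 * b)"
      by (rule arg_cong[where f="\<lambda>e. q powi e"]) (simp add: algebra_simps)
    have s: "sg (-1 - b) = - sg b" using sg_diff[of "-1" b] by simp
    show "f (-1 - b) = - f b" by (simp only: f_def e1 s mult_minus_left)
  qed (use hV in auto)
  then have "(f has_sum - V) UNIV" by (simp add: has_sum_uminus)
  then have "V = 0" using hV has_sum_unique by fastforce
  from hV \<open>V = 0\<close> show ?thesis unfolding f_def by simp
qed

lemma T_way1: "(Tf q has_sum (2 * ((- (1 / q)) * ((qpoch_inf q (q ^ 2)) ^ 2 * qpoch_inf (q ^ 2) (q ^ 2))) * (qpoch_inf (q ^ 4) (q ^ 4)) ^ 3)) UNIV"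
proof -
  define fC where "fC a = of_int a * sg a * q powi (a * a - 2 * a)" for a
  have fCs: "fC summable_on UNIV"
    by (rule summ_fam[OF q0 q1, where A=1 and B="-2" and K=1]) (auto simp: fC_def abs_mult power_int_abs intro: le_1abs')
  have h1: "((\<lambda>(a, b). (sg a * q powi (a * a - 2 * a)) * JT q b) has_sum
      ((- (1 / q)) * ((qpoch_inf q (q ^ 2)) ^ 2 * qpoch_inf (q ^ 2) (q ^ 2))) * (qpoch_inf (q ^ 4) (q ^ 4)) ^ 3) (UNIV \<times> UNIV)"
    by (rule has_sum_prod_real[OF fA_sum J_prod[OF q0 q1]])
  have h2: "((\<lambda>(a, b). fC a * (sg b * q powi (2 * b * b + 2 * b))) has_sum (infsum fC UNIV * 0)) (UNIV \<times> UNIV)"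
    by (rule has_sum_prod_real[OF _ fD_sum]) (use fCs in simp)
  have h2': "((\<lambda>x. - (case x of (a, b) \<Rightarrow> fC a * (sg b * q powi (2 * b * b + 2 * b)))) has_sum (- (infsum fC UNIV * 0))) (UNIV \<times> UNIV)"
    using h2 by (simp only: has_sum_uminus minus_minus)
  have h3: "((\<lambda>x. 2 * (case x of (a, b) \<Rightarrow> (sg a * q powi (a * a - 2 * a)) * JT q b)
         + - (case x of (a, b) \<Rightarrow> fC a * (sg b * q powi (2 * b * b + 2 * b)))) has_sum
      (2 * ((- (1 / q)) * ((qpoch_inf q (q ^ 2)) ^ 2 * qpoch_inf (q ^ 2) (q ^ 2)) * (qpoch_inf (q ^ 4) (q ^ 4)) ^ 3) + - (infsum fC UNIV * 0))) (UNIV \<times> UNIV)"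
    by (intro has_sum_add has_sum_cmult_right h1 h2')
  have e: "2 * (case x of (a, b) \<Rightarrow> (sg a * q powi (a * a - 2 * a)) * JT q b)
         + - (case x of (a, b) \<Rightarrow> fC a * (sg b * q powi (2 * b * b + 2 * b))) = Tf q x" for x
  proof (cases x)
    case (Pair a b)
    have pe: "q powi (a * a - 2 * a + 2 * b * b + 2 * b) = q powi (a * a - 2 * a) * q powi (2 * b * b + 2 * b)"
      by (metis add.assoc pw)
    show ?thesis unfolding Pair Tf_def JT_def fC_def case_prod_conv pe
      by (simp add: sg_add algebra_simps)
  qed
  show ?thesis using h3 unfolding e by (simp add: mult.assoc)
qed

end


definition phi0 :: "int \<times> int \<Rightarrow> int \<times> int" where "phi0 y = (case y of (m, c) \<Rightarrow> (2 * c + m + 1, c - m - 1))"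
definition psi0 :: "int \<times> int \<Rightarrow> int \<times> int" where "psi0 x = (case x of (a, b) \<Rightarrow> (- ((2 * b - a) div 3) - 1, b - (2 * b - a) div 3))"
definition phi2 :: "int \<times> int \<Rightarrow> int \<times> int" where "phi2 y = (case y of (m, c) \<Rightarrow> (1 - m - 2 * c, m - c))"
definition psi2 :: "int \<times> int \<Rightarrow> int \<times> int" where "psi2 x = (case x of (a, b) \<Rightarrow> ((2 * b - a + 1) div 3, (2 * b - a + 1) div 3 - b))"
definition iota :: "int \<times> int \<Rightarrow> int \<times> int" where
  "iota x = (case x of (a, b) \<Rightarrow> (2 * (2 * ((2 * b - a) div 3) + 1 - b) - (2 * b - a), 2 * ((2 * b - a) div 3) + 1 - b))"

definition Sr :: "int \<Rightarrow> (int \<times> int) set" where "Sr r = {x. (2 * snd x - fst x) mod 3 = r}"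

lemma Sr_univ: "UNIV = Sr 0 \<union> Sr 1 \<union> Sr 2"
  unfolding Sr_def by auto

lemma S0_bij:
  shows "psi0 (phi0 y) = y" "phi0 y \<in> Sr 0" "x \<in> Sr 0 \<Longrightarrow> phi0 (psi0 x) = x"
proof -
  obtain m c where y: "y = (m, c)" by (cases y)
  have k: "2 * (c - m - 1) - (2 * c + m + 1) = 3 * (- m - 1)" by simp
  have kd: "(2 * (c - m - 1) - (2 * c + m + 1)) div 3 = - m - 1" unfolding k by simp
  show "psi0 (phi0 y) = y" unfolding y phi0_def psi0_def case_prod_conv kd by simp
  show "phi0 y \<in> Sr 0" unfolding y phi0_def Sr_def by (simp add: k)
next
  assume "x \<in> Sr 0"
  obtain a b where x: "x = (a, b)" by (cases x)
  have "(2 * b - a) mod 3 = 0" using \<open>x \<in> Sr 0\<close> unfolding Sr_def x by simp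
  then have d: "2 * b - a = 3 * ((2 * b - a) div 3)" by presburger
  show "phi0 (psi0 x) = x" unfolding x phi0_def psi0_def using d by simp
qed

lemma S2_bij:
  shows "psi2 (phi2 y) = y" "phi2 y \<in> Sr 2" "x \<in> Sr 2 \<Longrightarrow> phi2 (psi2 x) = x"
proof -
  obtain m c where y: "y = (m, c)" by (cases y)
  have k: "2 * (m - c) - (1 - m - 2 * c) + 1 = 3 * m" by simp
  have k2: "2 * (m - c) - (1 - m - 2 * c) = 3 * m - 1" by simp
  have kd: "(2 * (m - c) - (1 - m - 2 * c) + 1) div 3 = m" unfolding k by simp
  show "psi2 (phi2 y) = y" unfolding y phi2_def psi2_def case_prod_conv kd by simp
  show "phi2 y \<in> Sr 2" unfolding y phi2_def Sr_def by (simp add: k2) presburger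
next
  assume "x \<in> Sr 2"
  obtain a b where x: "x = (a, b)" by (cases x)
  have "(2 * b - a) mod 3 = 2" using \<open>x \<in> Sr 2\<close> unfolding Sr_def x by simp
  then have d: "2 * b - a + 1 = 3 * ((2 * b - a + 1) div 3)" by presburger
  show "phi2 (psi2 x) = x" unfolding x phi2_def psi2_def using d by simp
qed

lemma S1_inv:
  assumes "x \<in> Sr 1"
  shows "iota (iota x) = x" "iota x \<in> Sr 1"
proof -
  obtain a b where x: "x = (a, b)" by (cases x)
  have "(2 * b - a) mod 3 = 1" using assms unfolding Sr_def x by simp
  then have d: "2 * b - a = 3 * ((2 * b - a) div 3) + 1" by presburger
  define d0 where "d0 = (2 * b - a) div 3"
  have dd: "2 * b - a = 3 * d0 + 1" using d d0_def by simp
  have k': "2 * (2 * d0 + 1 - b) - (2 * (2 * d0 + 1 - b) - (2 * b - a)) = 2 * b - a" by simp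
  show "iota (iota x) = x" unfolding x iota_def using dd by (simp add: k' d0_def[symmetric])
  show "iota x \<in> Sr 1" unfolding x iota_def Sr_def using dd by (simp add: d0_def[symmetric])
qed



context
  fixes q :: real
  assumes q0: "q \<noteq> 0" and q1: "\<bar>q\<bar> < 1"
begin

lemma Tf_summable: "Tf q summable_on UNIV"
  using T_way1[OF q0 q1] has_sum_imp_summable by blast

lemma Tf_iota: assumes "x \<in> Sr 1" shows "Tf q (iota x) = - Tf q x"
proof -
  obtain a b where x: "x = (a, b)" by (cases x)
  have "(2 * b - a) mod 3 = 1" using assms unfolding Sr_def x by simp
  then have d: "2 * b - a = 3 * ((2 * b - a) div 3) + 1" by presburger
  define d0 where "d0 = (2 * b - a) div 3"
  have dd: "a = 2 * b - 3 * d0 - 1" using d d0_def by simp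
  have ix: "iota x = (d0 + 1 - 2 * b, 2 * d0 + 1 - b)"
    unfolding x iota_def case_prod_conv d0_def[symmetric] using dd by simp
  have w: "2 * (2 * d0 + 1 - b) - (d0 + 1 - 2 * b) = 2 * b - a" using dd by simp
  have s: "sg (d0 + 1 - 2 * b + (2 * d0 + 1 - b)) = - sg (a + b)"
  proof -
    have "d0 + 1 - 2 * b + (2 * d0 + 1 - b) = (a + b) + 3 * (2 * d0 + 1 - 2 * b)" using dd by simp
    then have "sg (d0 + 1 - 2 * b + (2 * d0 + 1 - b)) = sg ((a + b) + 3 * (2 * d0 + 1 - 2 * b))"
      by (rule arg_cong[where f=sg])
    also have "\<dots> = sg (a + b) * sg (2 * d0 + 1 - 2 * b)" by (simp only: sg_add sg_3)
    finally have "sg (d0 + 1 - 2 * b + (2 * d0 + 1 - b)) = sg (a + b) * sg (2 * d0 + 1 - 2 * b)" .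
    moreover have "sg (2 * d0 + 1 - 2 * b) = -1"
    proof -
      have "odd (2 * d0 + 1 - 2 * b)" by presburger
      then show ?thesis unfolding sg_def by simp
    qed
    ultimately show ?thesis by simp
  qed
  have e: "(d0 + 1 - 2 * b) * (d0 + 1 - 2 * b) - 2 * (d0 + 1 - 2 * b) + 2 * (2 * d0 + 1 - b) * (2 * d0 + 1 - b) + 2 * (2 * d0 + 1 - b)
      = a * a - 2 * a + 2 * b * b + 2 * b"
    unfolding dd by (simp add: algebra_simps)
  show ?thesis unfolding ix unfolding x Tf_def case_prod_conv w s e by simp
qed

lemma T_S1: "(Tf q has_sum 0) (Sr 1)"
proof -
  define V where "V = infsum (Tf q) (Sr 1)"
  have hV: "(Tf q has_sum V) (Sr 1)"
    using summable_on_subset_banach[OF Tf_summable] by (simp add: V_def)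
  have "((\<lambda>x. - Tf q x) has_sum V) (Sr 1)"
    by (subst has_sum_reindex_bij_witness[where i=iota and j=iota and h="Tf q" and T="Sr 1"])
       (use hV S1_inv Tf_iota in auto)
  then have "(Tf q has_sum - V) (Sr 1)" by (simp add: has_sum_uminus)
  then have "V = 0" using hV has_sum_unique by fastforce
  then show ?thesis using hV by simp
qed

definition EE :: "int \<Rightarrow> int \<Rightarrow> int" where "EE m c = 6 * c * c - 2 * c + 3 * m * m + 2 * m - 1"

lemma Tf_phi0: "Tf q (phi0 (m, c)) = - 3 * (real_of_int m + 1) * sg c * q powi (EE m c)"
proof -
  have w: "2 * (c - m - 1) - (2 * c + m + 1) = - 3 * m - 3" by simp
  have s: "sg (2 * c + m + 1 + (c - m - 1)) = sg c"
  proof -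
    have "2 * c + m + 1 + (c - m - 1) = 3 * c" by simp
    then show ?thesis by (simp add: sg_3)
  qed
  have e: "(2 * c + m + 1) * (2 * c + m + 1) - 2 * (2 * c + m + 1) + 2 * (c - m - 1) * (c - m - 1) + 2 * (c - m - 1) = EE m c"
    unfolding EE_def by (simp add: algebra_simps)
  show ?thesis unfolding phi0_def Tf_def case_prod_conv w s e by (simp add: algebra_simps)
qed

lemma Tf_phi2: "Tf q (phi2 (m, c)) = (1 - 3 * real_of_int m) * sg c * q powi (EE m c)"
proof -
  have w: "2 * (m - c) - (1 - m - 2 * c) = 3 * m - 1" by simp
  have s: "sg (1 - m - 2 * c + (m - c)) = - sg c"
  proof -
    have "1 - m - 2 * c + (m - c) = 1 - 3 * c" by simp
    then show ?thesis by (simp add: sg_diff sg_3)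
  qed
  have e: "(1 - m - 2 * c) * (1 - m - 2 * c) - 2 * (1 - m - 2 * c) + 2 * (m - c) * (m - c) + 2 * (m - c) = EE m c"
    unfolding EE_def by (simp add: algebra_simps)
  show ?thesis unfolding phi2_def Tf_def case_prod_conv w s e by (simp add: algebra_simps)
qed

lemma T_S02: "(Tf q has_sum (- (2 / q) * (infsum (FT q) UNIV * qpoch_inf (q ^ 4) (q ^ 4)))) (Sr 0 \<union> Sr 2)"
proof -
  define V0 where "V0 = infsum (Tf q) (Sr 0)"
  define V2 where "V2 = infsum (Tf q) (Sr 2)"
  have h0: "(Tf q has_sum V0) (Sr 0)" using summable_on_subset_banach[OF Tf_summable] by (simp add: V0_def)
  have h2: "(Tf q has_sum V2) (Sr 2)" using summable_on_subset_banach[OF Tf_summable] by (simp add: V2_def)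
  have g0: "((\<lambda>y. Tf q (phi0 y)) has_sum V0) UNIV"
    by (subst has_sum_reindex_bij_witness[where i=psi0 and j=phi0 and h="Tf q" and T="Sr 0"])
       (use h0 S0_bij in auto)
  have g2: "((\<lambda>y. Tf q (phi2 y)) has_sum V2) UNIV"
    by (subst has_sum_reindex_bij_witness[where i=psi2 and j=phi2 and h="Tf q" and T="Sr 2"])
       (use h2 S2_bij in auto)
  have g: "((\<lambda>y. Tf q (phi0 y) + Tf q (phi2 y)) has_sum (V0 + V2)) UNIV" by (rule has_sum_add[OF g0 g2])
  have FS: "(FT q has_sum infsum (FT q) UNIV) UNIV" using FT_summable[OF q0 q1] by simp
  have pr: "((\<lambda>(m, c). FT q m * ET q c) has_sum (infsum (FT q) UNIV * qpoch_inf (q ^ 4) (q ^ 4))) (UNIV \<times> UNIV)"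
    by (rule has_sum_prod_real[OF FS E_prod[OF q0 q1]])
  have pr2: "((\<lambda>x. - (2 / q) * (case x of (m, c) \<Rightarrow> FT q m * ET q c)) has_sum (- (2 / q) * (infsum (FT q) UNIV * qpoch_inf (q ^ 4) (q ^ 4)))) (UNIV \<times> UNIV)"
    by (rule has_sum_cmult_right[OF pr])
  have eq: "Tf q (phi0 y) + Tf q (phi2 y) = - (2 / q) * (case y of (m, c) \<Rightarrow> FT q m * ET q c)" for y
  proof (cases y)
    case (Pair m c)
    have pe: "q powi (3 * m * m + 2 * m) * q powi (6 * c * c - 2 * c) = q * q powi (EE m c)"
    proof -
      have h: "3 * m * m + 2 * m + (6 * c * c - 2 * c) = EE m c + 1" unfolding EE_def by simp
      have "q powi (3 * m * m + 2 * m) * q powi (6 * c * c - 2 * c) = q powi (3 * m * m + 2 * m + (6 * c * c - 2 * c))"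
        by (rule pw[OF q0 q1, symmetric])
      also have "\<dots> = q powi (EE m c + 1)" by (simp only: h)
      also have "\<dots> = q * q powi (EE m c)" using q0 by (simp add: power_int_add_1')
      finally show ?thesis .
    qed
    have "- (2 / q) * (FT q m * ET q c) = - (2 / q) * (real_of_int (3 * m + 1) * sg c * (q powi (3 * m * m + 2 * m) * q powi (6 * c * c - 2 * c)))"
      unfolding FT_def ET_def by (simp add: mult_ac)
    also have "\<dots> = - 2 * real_of_int (3 * m + 1) * sg c * q powi (EE m c)"
      unfolding pe using q0 by (simp add: field_simps)
    finally show ?thesis unfolding Pair Tf_phi0 Tf_phi2 by (simp add: algebra_simps)
  qed
  have g': "((\<lambda>x. - (2 / q) * (case x of (m, c) \<Rightarrow> FT q m * ET q c)) has_sum (V0 + V2)) UNIV"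
    using g unfolding eq .
  have pr2': "((\<lambda>x. - (2 / q) * (case x of (m, c) \<Rightarrow> FT q m * ET q c)) has_sum (- (2 / q) * (infsum (FT q) UNIV * qpoch_inf (q ^ 4) (q ^ 4)))) UNIV"
    using pr2 by simp
  have "V0 + V2 = - (2 / q) * (infsum (FT q) UNIV * qpoch_inf (q ^ 4) (q ^ 4))"
    using has_sum_unique[OF g' pr2'] .
  moreover have "Sr 0 \<inter> Sr 2 = {}" unfolding Sr_def by auto
  ultimately show ?thesis using has_sum_Un_disjoint[OF h0 h2] by simp
qed

lemma T_way2: "(Tf q has_sum (- (2 / q) * (infsum (FT q) UNIV * qpoch_inf (q ^ 4) (q ^ 4)))) UNIV"
proof -
  have d: "(Sr 0 \<union> Sr 2) \<inter> Sr 1 = {}" unfolding Sr_def by auto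
  have U: "UNIV = (Sr 0 \<union> Sr 2) \<union> Sr 1" using Sr_univ by auto
  show ?thesis using has_sum_Un_disjoint[OF T_S02 T_S1 d] U by simp
qed

lemma qpoch_nz: "\<bar>b\<bar> < 1 \<Longrightarrow> \<bar>a\<bar> < 1 \<Longrightarrow> qpoch_inf a b \<noteq> 0" for a b :: real
  unfolding qpoch_inf_def
proof (rule prodinf_nonzero[OF qpoch_conv])
  fix i assume "\<bar>b\<bar> < 1" "\<bar>a\<bar> < 1"
  moreover have "\<bar>b\<bar> ^ i \<le> 1" using \<open>\<bar>b\<bar> < 1\<close> by (intro power_le_one) auto
  ultimately have "\<bar>a\<bar> * \<bar>b\<bar> ^ i \<le> \<bar>a\<bar>" by (intro mult_left_le) auto
  then have "\<bar>a * b ^ i\<bar> < 1" using \<open>\<bar>a\<bar> < 1\<close> by (simp add: abs_mult power_abs)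
  then show "1 - a * b ^ i \<noteq> 0" by auto
qed

theorem FT_val: "(FT q has_sum ((qpoch_inf q (q ^ 2)) ^ 2 * qpoch_inf (q ^ 2) (q ^ 2) * (qpoch_inf (q ^ 4) (q ^ 4)) ^ 2)) UNIV"
proof -
  define Ev where "Ev = qpoch_inf (q ^ 4) (q ^ 4)"
  define Phi where "Phi = (qpoch_inf q (q ^ 2)) ^ 2 * qpoch_inf (q ^ 2) (q ^ 2)"
  have Q: "\<bar>q ^ 4\<bar> < 1" using power_less_one_iff[of "\<bar>q\<bar>" 4] q1 by (simp add: power_abs)
  have Ev0: "Ev \<noteq> 0" unfolding Ev_def by (rule qpoch_nz[OF Q Q])
  have "2 * (- (1 / q) * Phi) * Ev ^ 3 = - (2 / q) * (infsum (FT q) UNIV * Ev)"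
    using has_sum_unique[OF T_way1[OF q0 q1] T_way2] unfolding Ev_def Phi_def by (simp add: mult.assoc)
  then have "infsum (FT q) UNIV * Ev = Phi * Ev ^ 3" using q0 by (simp add: field_simps)
  then have "infsum (FT q) UNIV = Phi * Ev ^ 2" using Ev0 by (simp add: power3_eq_cube power2_eq_square)
  moreover have "(FT q has_sum infsum (FT q) UNIV) UNIV" using FT_summable[OF q0 q1] by simp
  ultimately show ?thesis unfolding Ev_def Phi_def by simp
qed

end


definition gn :: "int \<Rightarrow> nat" where "gn j = nat (j * (3 * j + 2))"

lemma gz_pos: "j \<noteq> 0 \<Longrightarrow> j * (3 * j + 2) \<ge> \<bar>j\<bar>" for j :: int
proof (cases "j > 0")
  case True
  then have "j * 1 \<le> j * (3 * j + 2)" by (intro mult_left_mono) auto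
  then show ?thesis using True by simp
next
  case False
  assume "j \<noteq> 0"
  with False have "j \<le> -1" by simp
  then have "(- j) * 1 \<le> (- j) * (- 3 * j - 2)" by (intro mult_left_mono) auto
  then show ?thesis using False by (simp add: algebra_simps)
qed

lemma gn_pos: "j \<noteq> 0 \<Longrightarrow> gn j > 0"
proof -
  assume j: "j \<noteq> 0"
  then have "j * (3 * j + 2) > 0" using gz_pos[OF j] by linarith
  then show ?thesis unfolding gn_def by simp
qed

lemma gn_ge: "j \<noteq> 0 \<Longrightarrow> \<bar>j\<bar> \<le> int (gn j)"
proof -
  assume j: "j \<noteq> 0"
  have h: "\<bar>j\<bar> \<le> j * (3 * j + 2)" using gz_pos[OF j] .
  then have "0 \<le> j * (3 * j + 2)" using abs_ge_zero[of j] by linarith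
  then show ?thesis using h unfolding gn_def by simp
qed

lemma gz_inj: "j1 * (3 * j1 + 2) = j2 * (3 * j2 + 2) \<Longrightarrow> j1 = j2" for j1 j2 :: int
proof -
  assume h: "j1 * (3 * j1 + 2) = j2 * (3 * j2 + 2)"
  have "(j1 - j2) * (3 * (j1 + j2) + 2) = 0" using h by (simp add: algebra_simps)
  moreover have "3 * (j1 + j2) + 2 \<noteq> 0" by presburger
  ultimately show ?thesis by simp
qed

lemma gn_inj: "j1 \<noteq> 0 \<Longrightarrow> j2 \<noteq> 0 \<Longrightarrow> gn j1 = gn j2 \<Longrightarrow> j1 = j2"
  using gz_pos[of j1] gz_pos[of j2] gz_inj[of j1 j2] unfolding gn_def by simp

lemma U15_gn: "U15 = {gn j | j. j \<noteq> 0}"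
  unfolding U15_def gn_def by simp

definition vv :: "nat \<Rightarrow> int" where "vv u = (\<Sum>j\<in>{j. j \<noteq> 0 \<and> gn j = u}. (-1 - 3 * j))"

lemma vv_gn: "j \<noteq> 0 \<Longrightarrow> vv (gn j) = -1 - 3 * j"
proof -
  assume j: "j \<noteq> 0"
  have "{i. i \<noteq> 0 \<and> gn i = gn j} = {j}" using gn_inj j by auto
  then show ?thesis unfolding vv_def by simp
qed

lemma vv_notU: "u \<notin> U15 \<Longrightarrow> vv u = 0"
proof -
  assume "u \<notin> U15"
  then have e: "{j. j \<noteq> 0 \<and> gn j = u} = {}" unfolding U15_gn by auto
  show ?thesis unfolding vv_def e by simp
qed

definition Jc :: "nat list \<Rightarrow> int set" where "Jc c = {j. j \<noteq> 0 \<and> mult (gn j) c > 0}"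
definition wt :: "nat list \<Rightarrow> int" where "wt c = (\<Prod>j\<in>Jc c. (-1 - 3 * j) ^ mult (gn j) c)"

lemma Jc_finite: "finite (Jc c)"
proof -
  have "Jc c \<subseteq> {- int (sum_list c)..int (sum_list c)}"
  proof
    fix j assume "j \<in> Jc c"
    then have j0: "j \<noteq> 0" and m: "mult (gn j) c > 0" unfolding Jc_def by auto
    then have "gn j \<in> set c" unfolding mult_def by (metis count_list_0_iff less_irrefl)
    then have "gn j \<le> sum_list c" by (rule member_le_sum_list) auto
    then show "j \<in> {- int (sum_list c)..int (sum_list c)}" using gn_ge[OF j0] by auto
  qed
  then show ?thesis by (rule finite_subset) simp
qed

lemma wt_Cons:
  assumes j0: "j0 \<noteq> 0"
  shows "wt (gn j0 # c) = (-1 - 3 * j0) * wt c"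
proof -
  have m: "mult (gn j) (gn j0 # c) = mult (gn j) c + (if j = j0 then 1 else 0)" if "j \<noteq> 0" for j
    using gn_inj[OF that j0] unfolding mult_def by auto
  show ?thesis
  proof (cases "j0 \<in> Jc c")
    case True
    have J: "Jc (gn j0 # c) = Jc c" using True j0 unfolding Jc_def by (auto simp: m split: if_splits)
    have "wt (gn j0 # c) = (\<Prod>j\<in>Jc c. (-1 - 3 * j) ^ mult (gn j) (gn j0 # c))" unfolding wt_def J ..
    also have "\<dots> = (-1 - 3 * j0) ^ mult (gn j0) (gn j0 # c) * (\<Prod>j\<in>Jc c - {j0}. (-1 - 3 * j) ^ mult (gn j) (gn j0 # c))"
      by (rule prod.remove[OF Jc_finite True])
    also have "(\<Prod>j\<in>Jc c - {j0}. (-1 - 3 * j) ^ mult (gn j) (gn j0 # c)) = (\<Prod>j\<in>Jc c - {j0}. (-1 - 3 * j) ^ mult (gn j) c)"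
      by (intro prod.cong refl) (auto simp: m Jc_def)
    also have "mult (gn j0) (gn j0 # c) = Suc (mult (gn j0) c)" using m[OF j0] by simp
    also have "(-1 - 3 * j0) ^ Suc (mult (gn j0) c) * (\<Prod>j\<in>Jc c - {j0}. (-1 - 3 * j) ^ mult (gn j) c)
        = (-1 - 3 * j0) * ((-1 - 3 * j0) ^ mult (gn j0) c * (\<Prod>j\<in>Jc c - {j0}. (-1 - 3 * j) ^ mult (gn j) c))"
      by simp
    also have "(-1 - 3 * j0) ^ mult (gn j0) c * (\<Prod>j\<in>Jc c - {j0}. (-1 - 3 * j) ^ mult (gn j) c) = wt c"
      unfolding wt_def by (rule prod.remove[OF Jc_finite True, symmetric])
    finally show ?thesis .
  next
    case False
    then have mc0: "mult (gn j0) c = 0" unfolding Jc_def using j0 by auto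
    have J: "Jc (gn j0 # c) = insert j0 (Jc c)" using j0 unfolding Jc_def by (auto simp: m)
    have "wt (gn j0 # c) = (\<Prod>j\<in>insert j0 (Jc c). (-1 - 3 * j) ^ mult (gn j) (gn j0 # c))" unfolding wt_def J ..
    also have "\<dots> = (-1 - 3 * j0) ^ mult (gn j0) (gn j0 # c) * (\<Prod>j\<in>Jc c. (-1 - 3 * j) ^ mult (gn j) (gn j0 # c))"
      by (rule prod.insert[OF Jc_finite False])
    also have "(\<Prod>j\<in>Jc c. (-1 - 3 * j) ^ mult (gn j) (gn j0 # c)) = wt c"
      unfolding wt_def using False by (intro prod.cong refl) (auto simp: m Jc_def)
    also have "mult (gn j0) (gn j0 # c) = 1" using m[OF j0] mc0 by simp
    finally show ?thesis by simp
  qed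
qed

lemma wt_Nil: "wt [] = 1"
  unfolding wt_def Jc_def mult_def by simp

lemma wt_Cons_vv: "u \<in> U15 \<Longrightarrow> wt (u # c) = vv u * wt c"
proof -
  assume "u \<in> U15"
  then obtain j where j: "j \<noteq> 0" "u = gn j" unfolding U15_gn by auto
  then show ?thesis using wt_Cons vv_gn by simp
qed

definition CC :: "nat \<Rightarrow> nat list set" where "CC n = {c \<in> compositions U15. sum_list c = n}"

definition tt :: "nat \<Rightarrow> int" where "tt n = (\<Sum>c\<in>CC n. wt c)"

lemma U15_pos: "u \<in> U15 \<Longrightarrow> u > 0"
  unfolding U15_gn using gn_pos by auto

lemma CC_finite: "finite (CC n)"
proof -
  have "CC n \<subseteq> {xs. set xs \<subseteq> {1..n} \<and> length xs \<le> n}"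
  proof
    fix c assume "c \<in> CC n"
    then have c: "\<forall>x\<in>set c. 0 < x" "sum_list c = n" unfolding CC_def compositions_def by auto
    have "set c \<subseteq> {1..n}"
    proof
      fix x assume "x \<in> set c"
      then have "x \<le> sum_list c" by (rule member_le_sum_list) auto
      then show "x \<in> {1..n}" using c \<open>x \<in> set c\<close> by (auto simp: Suc_le_eq)
    qed
    moreover have "length c \<le> sum_list c" using c(1) by (induction c) (auto simp: Suc_le_eq)
    ultimately show "c \<in> {xs. set xs \<subseteq> {1..n} \<and> length xs \<le> n}" using c by simp
  qed
  then show ?thesis by (rule finite_subset) (rule finite_lists_length_le, simp)
qed

lemma tt_0: "tt 0 = 1"
proof -
  have "CC 0 = {[]}"
  proof (rule set_eqI, rule iffI)
    fix c assume "c \<in> CC 0"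
    then have "\<forall>x\<in>set c. 0 < x" "sum_list c = 0" unfolding CC_def compositions_def by auto
    then show "c \<in> {[]}" by (cases c) auto
  qed (auto simp: CC_def compositions_def)
  then show ?thesis unfolding tt_def by (simp add: wt_Nil)
qed

lemma tt_rec: "n > 0 \<Longrightarrow> tt n = (\<Sum>u\<in>{1..n}. vv u * tt (n - u))"
proof -
  assume n: "n > 0"
  define A where "A = {u \<in> {1..n}. u \<in> U15}"
  have "(\<Sum>(u, c)\<in>Sigma A (\<lambda>u. CC (n - u)). wt (u # c)) = (\<Sum>c\<in>CC n. wt c)"
  proof (rule sum.reindex_bij_witness[where j="\<lambda>(u, c). u # c" and i="\<lambda>c. (hd c, tl c)"])
    fix x assume x: "x \<in> Sigma A (\<lambda>u. CC (n - u))"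
    then obtain u c where uc: "x = (u, c)" "u \<in> A" "c \<in> CC (n - u)" by auto
    then show "(case x of (u, c) \<Rightarrow> u # c) \<in> CC n" "(hd (case x of (u, c) \<Rightarrow> u # c), tl (case x of (u, c) \<Rightarrow> u # c)) = x"
      "wt (case x of (u, c) \<Rightarrow> u # c) = (case x of (u, c) \<Rightarrow> wt (u # c))"
      unfolding A_def CC_def compositions_def using U15_pos by auto
  next
    fix c assume c: "c \<in> CC n"
    then have "c \<noteq> []" using n unfolding CC_def by auto
    then show "(case (hd c, tl c) of (u, c) \<Rightarrow> u # c) = c" by simp
    show "(hd c, tl c) \<in> Sigma A (\<lambda>u. CC (n - u))"
    proof -
      obtain u c' where cc: "c = u # c'" using \<open>c \<noteq> []\<close> by (cases c) auto
      then have "u \<in> U15" "u > 0" "sum_list c = n" "\<forall>x\<in>set c'. 0 < x \<and> x \<in> U15" using c unfolding CC_def compositions_def by auto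
      then show ?thesis unfolding cc A_def CC_def compositions_def by auto
    qed
  qed
  then have "tt n = (\<Sum>(u, c)\<in>Sigma A (\<lambda>u. CC (n - u)). wt (u # c))" unfolding tt_def by simp
  also have "\<dots> = (\<Sum>u\<in>A. \<Sum>c\<in>CC (n - u). wt (u # c))"
    by (rule sum.Sigma[symmetric]) (auto simp: A_def CC_finite)
  also have "\<dots> = (\<Sum>u\<in>A. vv u * tt (n - u))"
    unfolding tt_def sum_distrib_left by (intro sum.cong refl) (auto simp: A_def wt_Cons_vv)
  also have "\<dots> = (\<Sum>u\<in>{1..n}. vv u * tt (n - u))"
    unfolding A_def by (rule sum.mono_neutral_left) (auto simp: vv_notU)
  finally show ?thesis .
qed



definition fc :: "nat \<Rightarrow> real" where "fc n = (if n = 0 then 1 else - of_int (vv n))"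

lemma gn_0: "gn 0 = 0" unfolding gn_def by simp

lemma gn_inj_all: "inj gn"
proof (rule injI)
  fix a b assume h: "gn a = gn b"
  show "a = b"
  proof (cases "a = 0")
    case True
    then show ?thesis using h gn_pos[of b] gn_0 by (cases "b = 0") auto
  next
    case False
    then show ?thesis using h gn_pos[of b] gn_pos[of a] gn_0 gn_inj[of a b] by (cases "b = 0") auto
  qed
qed

lemma U15_range: "U15 \<subseteq> range gn" unfolding U15_gn by auto

lemma FS_pow:
  fixes q :: real
  assumes q0: "q \<noteq> 0" and q1: "\<bar>q\<bar> < 1"
  shows "(\<lambda>n. fc n * q ^ n) sums ((qpoch_inf q (q ^ 2)) ^ 2 * qpoch_inf (q ^ 2) (q ^ 2) * (qpoch_inf (q ^ 4) (q ^ 4)) ^ 2)"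
proof -
  define FS where "FS = (qpoch_inf q (q ^ 2)) ^ 2 * qpoch_inf (q ^ 2) (q ^ 2) * (qpoch_inf (q ^ 4) (q ^ 4)) ^ 2"
  define h where "h n = fc n * q ^ n" for n
  have e: "FT q m = h (gn m)" for m
  proof (cases "m = 0")
    case True then show ?thesis by (simp add: FT_def h_def fc_def gn_0)
  next
    case False
    have p: "m * (3 * m + 2) \<ge> 0" using gz_pos[OF False] abs_ge_zero[of m] by linarith
    have g: "3 * m * m + 2 * m = int (gn m)" using p unfolding gn_def by (simp add: algebra_simps)
    have "gn m \<noteq> 0" using gn_pos[OF False] by simp
    then show ?thesis unfolding FT_def h_def fc_def g power_int_of_nat using vv_gn[OF False] by simp
  qed
  have "(FT q has_sum FS) UNIV" unfolding FS_def by (rule FT_val[OF q0 q1])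
  moreover have fe: "FT q = h \<circ> gn" by (rule ext) (simp add: e)
  ultimately have "((h \<circ> gn) has_sum FS) UNIV" by simp
  then have "(h has_sum FS) (range gn)" by (subst has_sum_reindex) (use gn_inj_all in auto)
  moreover have "h n = 0" if "n \<in> UNIV - range gn" for n
  proof -
    have "n \<noteq> 0" using that gn_0 by (metis DiffD2 rangeI)
    moreover have "n \<notin> U15" using that U15_range by auto
    ultimately show ?thesis unfolding h_def fc_def by (simp add: vv_notU)
  qed
  ultimately have "(h has_sum FS) UNIV"
    using has_sum_cong_neutral[of UNIV "range gn" h h FS] by auto
  then show ?thesis unfolding h_def FS_def by (rule has_sum_imp_sums)
qed



lemma powser_zero_coeffs:
  fixes d :: "nat \<Rightarrow> real"
  assumes r: "r > 0" and h: "\<And>q. 0 < \<bar>q\<bar> \<Longrightarrow> \<bar>q\<bar> < r \<Longrightarrow> (\<lambda>n. d n * q ^ n) sums 0"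
  shows "d k = 0"
proof (induction k rule: less_induct)
  case (less k)
  define e where "e j = d (j + k)" for j
  have he: "(\<lambda>j. e j * q ^ j) sums 0" if q: "0 < \<bar>q\<bar>" "\<bar>q\<bar> < r" for q
  proof -
    have "(\<lambda>j. d (j + k) * q ^ (j + k)) sums (0 - (\<Sum>i<k. d i * q ^ i))"
      using sums_split_initial_segment[OF h[OF q]] .
    moreover have "(\<Sum>i<k. d i * q ^ i) = 0" using less.IH by simp
    ultimately have "(\<lambda>j. d (j + k) * q ^ (j + k)) sums 0" by simp
    then have "(\<lambda>j. d (j + k) * q ^ (j + k) / q ^ k) sums (0 / q ^ k)" by (rule sums_divide)
    moreover have "\<And>j. d (j + k) * q ^ (j + k) / q ^ k = e j * q ^ j" using q by (simp add: e_def power_add)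
    ultimately show ?thesis by simp
  qed
  define F where "F x = (\<Sum>j. e j * x ^ j)" for x :: real
  have q0: "0 < \<bar>r / 2\<bar>" "\<bar>r / 2\<bar> < r" using r by auto
  have sK: "summable (\<lambda>j. e j * (r / 2) ^ j)" using he[OF q0] sums_summable by blast
  have cont: "isCont F 0" unfolding F_def by (rule isCont_powser[OF sK]) (use r in simp)
  have ev: "\<forall>\<^sub>F x in at (0::real). F x = 0"
  proof -
    have "\<forall>\<^sub>F x in at (0::real). x \<noteq> 0 \<and> dist x 0 < r" using r
      by (auto simp: eventually_at intro: exI[of _ r])
    then show ?thesis
    proof (rule eventually_mono)
      fix x :: real assume "x \<noteq> 0 \<and> dist x 0 < r"
      then have "0 < \<bar>x\<bar>" "\<bar>x\<bar> < r" by auto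
      then show "F x = 0" unfolding F_def using he sums_unique by fastforce
    qed
  qed
  have "(F \<longlongrightarrow> F 0) (at 0)" using cont by (simp add: isCont_def)
  moreover have "(F \<longlongrightarrow> 0) (at 0)"
  proof -
    have ev': "\<forall>\<^sub>F x in at (0::real). 0 = F x" using ev by (rule eventually_mono) simp
    show ?thesis by (rule Lim_transform_eventually[OF tendsto_const ev'])
  qed
  ultimately have "F 0 = 0" using tendsto_unique trivial_limit_at by blast
  then show ?case unfolding F_def e_def by simp
qed

lemma qpoch_nz2: "\<bar>b\<bar> < 1 \<Longrightarrow> \<bar>a\<bar> < 1 \<Longrightarrow> qpoch_inf a b \<noteq> 0" for a b :: real
  unfolding qpoch_inf_def
proof (rule prodinf_nonzero[OF qpoch_conv])
  fix i assume "\<bar>b\<bar> < 1" "\<bar>a\<bar> < 1"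
  moreover have "\<bar>b\<bar> ^ i \<le> 1" using \<open>\<bar>b\<bar> < 1\<close> by (intro power_le_one) auto
  ultimately have "\<bar>a\<bar> * \<bar>b\<bar> ^ i \<le> \<bar>a\<bar>" by (intro mult_left_le) auto
  then have "\<bar>a * b ^ i\<bar> < 1" using \<open>\<bar>a\<bar> < 1\<close> by (simp add: abs_mult power_abs)
  then show "1 - a * b ^ i \<noteq> 0" by auto
qed

theorem mainTheorem15:
  fixes s :: "nat \<Rightarrow> real"
  assumes gf: "\<And>q::real. \<bar>q\<bar> < 1 \<Longrightarrow>
     (\<lambda>n. s n * q ^ n) sums
       (qpoch_inf (q^2) (q^2) / ((qpoch_inf q q)^2 * (qpoch_inf (q^4) (q^4))^2))"
  shows "s n = of_int (\<Sum>c \<in> {c \<in> compositions U15. sum_list c = n}.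
            \<Prod>j \<in> {j::int. j \<noteq> 0 \<and> mult (nat (j * (3 * j + 2))) c > 0}.
               (-1 - 3 * j) ^ mult (nat (j * (3 * j + 2))) c)"
proof -
  define F where "F q = (qpoch_inf q (q ^ 2)) ^ 2 * qpoch_inf (q ^ 2) (q ^ 2) * (qpoch_inf (q ^ 4) (q ^ 4)) ^ 2" for q :: real
  have abs2: "\<bar>q ^ 2\<bar> < 1" "\<bar>q ^ 4\<bar> < 1" if "\<bar>q\<bar> < 1" for q :: real
    using power_less_one_iff[of "\<bar>q\<bar>" 2] power_less_one_iff[of "\<bar>q\<bar>" 4] that by (simp_all add: power_abs)
  have Fnz: "F q \<noteq> 0" if "\<bar>q\<bar> < 1" for q :: real
    unfolding F_def using qpoch_nz2[of "q ^ 2" q] qpoch_nz2[of "q ^ 2" "q ^ 2"] qpoch_nz2[of "q ^ 4" "q ^ 4"] abs2[OF that] that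
    by simp
  have hyp: "(\<lambda>n. s n * q ^ n) sums (1 / F q)" if "\<bar>q\<bar> < 1" for q :: real
  proof -
    have sp: "qpoch_inf q q = qpoch_inf q (q ^ 2) * qpoch_inf (q ^ 2) (q ^ 2)"
      using qpoch_split[OF that, of 2] by (simp add: numeral_2_eq_2)
    have nz: "qpoch_inf (q ^ 2) (q ^ 2) \<noteq> 0" using qpoch_nz2 abs2[OF that] by simp
    have "qpoch_inf (q^2) (q^2) / ((qpoch_inf q q)^2 * (qpoch_inf (q^4) (q^4))^2) = 1 / F q"
      unfolding sp F_def using nz by (simp add: field_simps power2_eq_square)
    then show ?thesis using gf[OF that] by simp
  qed
  have conv: "(\<lambda>k. (\<Sum>i\<le>k. fc i * s (k - i)) * q ^ k) sums 1" if q: "0 < \<bar>q\<bar>" "\<bar>q\<bar> < 1" for q :: real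
  proof -
    define q' where "q' = (1 + \<bar>q\<bar>) / 2"
    have q'0: "q' \<noteq> 0" "\<bar>q'\<bar> < 1" "norm q < norm q'" using q by (auto simp: q'_def)
    have sA: "summable (\<lambda>n. norm (fc n * q ^ n))"
      using powser_insidea[OF sums_summable[OF FS_pow[OF q'0(1,2)]] q'0(3)] .
    have sB: "summable (\<lambda>n. norm (s n * q ^ n))"
      using powser_insidea[OF sums_summable[OF hyp[OF q'0(2)]] q'0(3)] .
    have qq: "q \<noteq> 0" using q by auto
    have "(\<lambda>k. \<Sum>i\<le>k. (fc i * q ^ i) * (s (k - i) * q ^ (k - i))) sums ((\<Sum>n. fc n * q ^ n) * (\<Sum>n. s n * q ^ n))"
      by (rule Cauchy_product_sums[OF sA sB])
    moreover have "(\<Sum>n. fc n * q ^ n) = F q" using FS_pow[OF qq q(2)] unfolding F_def by (rule sums_unique[symmetric])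
    moreover have "(\<Sum>n. s n * q ^ n) = 1 / F q" using hyp[OF q(2)] by (rule sums_unique[symmetric])
    moreover have "(\<Sum>i\<le>k. (fc i * q ^ i) * (s (k - i) * q ^ (k - i))) = (\<Sum>i\<le>k. fc i * s (k - i)) * q ^ k" for k
      unfolding sum_distrib_right
    proof (rule sum.cong[OF refl])
      fix i assume "i \<in> {..k}"
      then have "q ^ i * q ^ (k - i) = q ^ k" by (simp flip: power_add)
      then show "fc i * q ^ i * (s (k - i) * q ^ (k - i)) = fc i * s (k - i) * q ^ k"
        by (metis mult.assoc mult.left_commute)
    qed
    ultimately show ?thesis using Fnz[OF q(2)] by simp
  qed
  have coef: "(\<Sum>i\<le>k. fc i * s (k - i)) = (if k = 0 then 1 else 0)" for k
  proof -
    define d where "d k = (\<Sum>i\<le>k. fc i * s (k - i)) - (if k = 0 then 1 else 0)" for k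
    have "d k = 0"
    proof (rule powser_zero_coeffs[where r=1])
      fix q :: real assume q: "0 < \<bar>q\<bar>" "\<bar>q\<bar> < 1"
      have one: "(\<lambda>k. (if k = 0 then 1 else 0) * q ^ k) sums 1"
        using sums_finite[of "{0}" "\<lambda>k. (if k = 0 then 1 else 0) * q ^ k"] by simp
      have "(\<lambda>k. (\<Sum>i\<le>k. fc i * s (k - i)) * q ^ k - (if k = 0 then 1 else 0) * q ^ k) sums (1 - 1)"
        by (rule sums_diff[OF conv[OF q] one])
      then show "(\<lambda>n. d n * q ^ n) sums 0" by (simp add: d_def left_diff_distrib)
    qed simp
    then show ?thesis by (simp add: d_def)
  qed
  have main: "s k = of_int (tt k)" for k
  proof (induction k rule: less_induct)
    case (less k)
    show ?case
    proof (cases "k = 0")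
      case True
      then show ?thesis using coef[of 0] by (simp add: fc_def tt_0)
    next
      case False
      have split: "{..k} = insert 0 {1..k}" by auto
      have "0 = (\<Sum>i\<le>k. fc i * s (k - i))" using coef[of k] False by simp
      also have "\<dots> = s k + (\<Sum>i\<in>{1..k}. - of_int (vv i) * s (k - i))"
        unfolding split by (subst sum.insert) (auto simp: fc_def intro!: sum.cong)
      finally have "s k = (\<Sum>i\<in>{1..k}. of_int (vv i) * s (k - i))" by (simp add: sum_negf)
      also have "\<dots> = (\<Sum>i\<in>{1..k}. of_int (vv i) * of_int (tt (k - i)))"
        by (intro sum.cong refl) (use less.IH in auto)
      also have "\<dots> = of_int (tt k)" using tt_rec[of k] False by simp
      finally show ?thesis .
    qed
  qed
  show ?thesis using main[of n] unfolding tt_def CC_def wt_def Jc_def gn_def .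
qed



end
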